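(* $$\bigcap_{m\ge1}\mathcal{P}_m=\bigcap_{m\ge1,\ m\text{ odd}}\mathcal{P}_m=\langle A_1,A_2\rangle,$$ where $\langle A_1,A_2\rangle$ is the $\mathbb{Z}$-submodule of $\mathbb{Z}^{24}$ generated by $A_1=(1,0,-1)^8=(1,0,-1,1,0,-1,\dots,1,0,-1)$ and $A_2=(0,1,-1,-1,3,-2,-2,5,-3,-3,7,-4,-4,9,-5,-5,11,-6,-6,13,-7,-7,15,-8)$.
   Context: For a positive integer $m$, $\mathcal{P}_m$ is the set of $A\in\mathbb{Z}^{24}$ such that the orbit of $\mathrm{IAP}(\pi_m(A),\pi_m(A)X_{24})$ is $(24m,24m)$-periodic in $\mathbb{Z}/m\mathbb{Z}$. Here $\pi_m$ is reduction mod $m$; tuples are row vectors; $X_{24}=(\delta_{r,s}+\delta_{r,25-s})_{1\le r,s\le24}$. For $24$-tuples $A=(a_0,\dots,a_{23})$, $D=(d_0,\dots,d_{23})$, $\mathrm{IAP}(A,D)=(u_j)_{j\in\mathbb{Z}}$ with $u_{24q+r}=a_r+qd_r$. The orbit of $(u_j)$ is $(a_{i,j})_{(i,j)\in\mathbb{N}\times\mathbb{Z}}$ with $a_{0,j}=u_j$, $a_{i,j}=-a_{i-1,j}-a_{i-1,j+1}$; it is $(p,q)$-periodic if $a_{i+q,j}=a_{i,j+p}=a_{i,j}$ for all $(i,j)$. *)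

theory Defs
  imports "HOL-Number_Theory.Cong"
begin

text \<open>24-tuples are int lists of length 24, indexed 0..23 (a_0,...,a_23).
Elements of Z/mZ are represented by integers; equality in Z/mZ is congruence mod m.\<close>

definition X24 :: "nat \<Rightarrow> nat \<Rightarrow> int" where
  "X24 r s = (if r = s then 1 else 0) + (if r = 23 - s then 1 else 0)"
  \<comment> \<open>0-indexed version of (delta(r,s) + delta(r,25-s)) for 1 <= r,s <= 24\<close>

definition rowmat :: "int list \<Rightarrow> int list" where
  "rowmat A = map (\<lambda>s. \<Sum>r<24. A ! r * X24 r s) [0..<24]"

definition redmod :: "nat \<Rightarrow> int list \<Rightarrow> int list" where
  "redmod m A = map (\<lambda>x. x mod int m) A"

definition IAP :: "int list \<Rightarrow> int list \<Rightarrow> int \<Rightarrow> int" where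
  "IAP A D j = A ! nat (j mod 24) + (j div 24) * D ! nat (j mod 24)"

primrec orbit :: "(int \<Rightarrow> int) \<Rightarrow> nat \<Rightarrow> int \<Rightarrow> int" where
  "orbit u 0 j = u j"
| "orbit u (Suc i) j = - orbit u i j - orbit u i (j + 1)"

definition periodic_mod :: "nat \<Rightarrow> int \<Rightarrow> nat \<Rightarrow> (nat \<Rightarrow> int \<Rightarrow> int) \<Rightarrow> bool" where
  "periodic_mod m p q a \<longleftrightarrow>
     (\<forall>i j. [a (i + q) j = a i j] (mod int m) \<and> [a i (j + p) = a i j] (mod int m))"

definition Pset :: "nat \<Rightarrow> int list set" where
  "Pset m = {A. length A = 24 \<and>
     periodic_mod m (24 * int m) (24 * m)
       (orbit (IAP (redmod m A) (redmod m (rowmat (redmod m A)))))}"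

definition A1 :: "int list" where
  "A1 = concat (replicate 8 [1, 0, -1])"

definition A2 :: "int list" where
  "A2 = [0,1,-1,-1,3,-2,-2,5,-3,-3,7,-4,-4,9,-5,-5,11,-6,-6,13,-7,-7,15,-8]"

definition span2 :: "int list \<Rightarrow> int list \<Rightarrow> int list set" where
  "span2 B C = {map2 (\<lambda>x y. a * x + b * y) B C | a b :: int. True}"

end

theory Submission
  imports Defs "HOL-Computational_Algebra.Primes"
begin

lemma orbit_add: "orbit u (a + b) j = orbit (orbit u b) a j"
  by (induction a arbitrary: j) auto

lemma orbit_cong:
  assumes "\<And>n. [f n = g n] (mod m)"
  shows "[orbit f i j = orbit g i j] (mod m)"
  using assms
proof (induction i arbitrary: j)
  case 0 then show ?case by simp
next
  case (Suc i)
  have "[- orbit f i j - orbit f i (j+1) = - orbit g i j - orbit g i (j+1)] (mod m)"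
    using Suc by (intro cong_diff) (auto simp: cong_minus_minus_iff)
  then show ?case by simp
qed

lemma orbit_lin: "orbit (\<lambda>n. a * f n + b * h n) i j = a * orbit f i j + b * orbit h i j"
  by (induction i arbitrary: j) (auto simp: algebra_simps)

lemma orbit_ext: assumes "\<And>n. f n = g n" shows "orbit f i j = orbit g i j"
proof -
  have "f = g" using assms by (rule ext)
  then show ?thesis by simp
qed

lemma orbit_hper:
  assumes "\<And>n. [h (n + P) = h n] (mod m)"
  shows "[orbit h i (j + P) = orbit h i j] (mod m)"
  using assms
proof (induction i arbitrary: j)
  case 0 then show ?case by simp
next
  case (Suc i)
  have e: "j + P + 1 = (j + 1) + P" by simp
  have "[- orbit h i (j + P) - orbit h i (j + P + 1) = - orbit h i j - orbit h i (j+1)] (mod m)"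
    unfolding e using Suc by (intro cong_diff) (auto simp: cong_minus_minus_iff)
  then show ?case by simp
qed

lemma pascal_sum:
  fixes h :: "nat \<Rightarrow> int"
  shows "(\<Sum>k\<le>Suc n. int (Suc n choose k) * h k)
       = (\<Sum>k\<le>n. int (n choose k) * h k) + (\<Sum>k\<le>n. int (n choose k) * h (Suc k))"
proof -
  have "(\<Sum>k\<le>Suc n. int (Suc n choose k) * h k)
      = h 0 + (\<Sum>k\<le>n. int (Suc n choose Suc k) * h (Suc k))"
    by (subst sum.atMost_Suc_shift) simp
  also have "\<dots> = h 0 + (\<Sum>k\<le>n. int (n choose Suc k) * h (Suc k)) + (\<Sum>k\<le>n. int (n choose k) * h (Suc k))"
    by (simp add: algebra_simps sum.distrib)
  also have "h 0 + (\<Sum>k\<le>n. int (n choose Suc k) * h (Suc k)) = (\<Sum>k\<le>Suc n. int (n choose k) * h k)"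
    by (subst sum.atMost_Suc_shift) simp
  also have "\<dots> = (\<Sum>k\<le>n. int (n choose k) * h k)"
    by simp
  finally show ?thesis .
qed

lemma orbit_closed:
  "orbit f n j = (-1)^n * (\<Sum>k\<le>n. int (n choose k) * f (j + int k))"
proof (induction n arbitrary: j)
  case 0 then show ?case by simp
next
  case (Suc n)
  have "orbit f (Suc n) j = - orbit f n j - orbit f n (j+1)" by simp
  also have "\<dots> = (-1)^Suc n * ((\<Sum>k\<le>n. int (n choose k) * f (j + int k))
          + (\<Sum>k\<le>n. int (n choose k) * f (j + int (Suc k))))"
    by (simp add: Suc.IH algebra_simps)
  also have "\<dots> = (-1)^Suc n * (\<Sum>k\<le>Suc n. int (Suc n choose k) * f (j + int k))"
    by (subst pascal_sum[where h = "\<lambda>k. f (j + int k)"]) simp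
  finally show ?case .
qed

lemma orbit_prime:
  assumes p: "prime p" "odd p"
  shows "[orbit f p j = - (f j + f (j + int p))] (mod int p)"
proof -
  have p0: "p > 0" using p prime_gt_0_nat by blast
  have "(\<Sum>k\<le>p. int (p choose k) * f (j + int k))
      = (\<Sum>k\<in>{1..<p}. int (p choose k) * f (j + int k)) + f j + f (j + int p)"
  proof -
    have "{..p} = insert 0 (insert p {1..<p})" using p0 by auto
    then show ?thesis using p0 by (simp add: algebra_simps)
  qed
  moreover have "int p dvd (\<Sum>k\<in>{1..<p}. int (p choose k) * f (j + int k))"
    using p by (intro dvd_sum) (auto intro!: dvd_mult2 simp: dvd_choose_prime int_dvd_int_iff)
  ultimately have "[(\<Sum>k\<le>p. int (p choose k) * f (j + int k)) = f j + f (j + int p)] (mod int p)"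
    by (simp add: cong_iff_dvd_diff)
  then have "[-(\<Sum>k\<le>p. int (p choose k) * f (j + int k)) = - (f j + f (j + int p))] (mod int p)"
    by (simp only: cong_minus_minus_iff)
  then show ?thesis using p by (simp add: orbit_closed)
qed


lemma orbit_iter:
  assumes p: "prime p" "odd p"
  shows "[orbit f (c * p) j = orbit (\<lambda>k. f (j + k * int p)) c 0] (mod int p)"
proof (induction c arbitrary: f j)
  case 0 then show ?case by simp
next
  case (Suc c)
  have "orbit f (Suc c * p) j = orbit (orbit f p) (c * p) j"
    by (metis orbit_add add.commute mult_Suc)
  also have "[\<dots> = orbit (\<lambda>k. orbit f p (j + k * int p)) c 0] (mod int p)"
    by (rule Suc.IH)
  also have "[orbit (\<lambda>k. orbit f p (j + k * int p)) c 0 = orbit (\<lambda>k. - (f (j + k * int p) + f (j + k * int p + int p))) c 0] (mod int p)"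
    by (rule orbit_cong) (rule orbit_prime[OF p])
  also have "orbit (\<lambda>k. - (f (j + k * int p) + f (j + k * int p + int p))) c 0
           = orbit (orbit (\<lambda>k. f (j + k * int p)) 1) c 0"
    by (rule orbit_ext) (simp add: algebra_simps)
  also have "\<dots> = orbit (\<lambda>k. f (j + k * int p)) (Suc c) 0"
    by (metis orbit_add Suc_eq_plus1)
  finally show ?case .
qed

lemma orbit_iter2:
  assumes p: "prime p" "odd p"
  shows "[orbit f (c * p * p) j = orbit (\<lambda>k. f (j + k * int (p * p))) c 0] (mod int p)"
proof -
  have "[orbit f ((c * p) * p) j = orbit (\<lambda>k. f (j + k * int p)) (c * p) 0] (mod int p)"
    by (rule orbit_iter[OF p])
  also have "[orbit (\<lambda>k. f (j + k * int p)) (c * p) 0 = orbit (\<lambda>l. (\<lambda>k. f (j + k * int p)) (0 + l * int p)) c 0] (mod int p)"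
    by (rule orbit_iter[OF p])
  also have "orbit (\<lambda>l. (\<lambda>k. f (j + k * int p)) (0 + l * int p)) c 0 = orbit (\<lambda>k. f (j + k * int (p * p))) c 0"
    by (rule orbit_ext) (simp add: algebra_simps)
  finally show ?thesis by simp
qed

lemma IAP_shift: "IAP A D (n + 24 * s) = IAP A D n + s * D ! nat (n mod 24)"
  by (simp add: IAP_def algebra_simps)

lemma rowmat_len [simp]: "length (rowmat A) = 24"
  by (simp add: rowmat_def)

lemma rowmat_nth:
  assumes "s < 24"
  shows "rowmat A ! s = A ! s + A ! (23 - s)"
proof -
  have "rowmat A ! s = (\<Sum>r<24. A ! r * X24 r s)"
    using assms by (simp add: rowmat_def)
  also have "\<dots> = (\<Sum>r<24. (if r = s then A ! r else 0) + (if r = 23 - s then A ! r else 0))"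
    by (rule sum.cong) (auto simp: X24_def)
  also have "\<dots> = A ! s + A ! (23 - s)"
    using assms by (simp add: sum.distrib)
  finally show ?thesis .
qed

lemma cong_mod_self: "[x mod (m::int) = x] (mod m)"
  by (simp add: cong_def)

lemma redmod_transfer:
  assumes "length A = 24"
  shows "[IAP (redmod m A) (redmod m (rowmat (redmod m A))) n = IAP A (rowmat A) n] (mod int m)"
proof -
  define s where "s = nat (n mod 24)"
  have s: "s < 24" unfolding s_def by linarith
  have l: "length (redmod m A) = 24" using assms by (simp add: redmod_def)
  have "IAP (redmod m A) (redmod m (rowmat (redmod m A))) n
     = A ! s mod int m + (n div 24) * ((A ! s mod int m + A ! (23 - s) mod int m) mod int m)"
    using s assms l by (simp add: IAP_def s_def[symmetric] redmod_def rowmat_nth)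
  also have "[A ! s mod int m + (n div 24) * ((A ! s mod int m + A ! (23 - s) mod int m) mod int m) = A ! s + (n div 24) * (A ! s + A ! (23 - s))] (mod int m)"
    by (intro cong_add cong_mult cong_refl cong_mod_self cong_trans[OF cong_mod_self])
  also have "A ! s + (n div 24) * (A ! s + A ! (23 - s)) = IAP A (rowmat A) n"
    using s by (simp add: IAP_def s_def[symmetric] rowmat_nth)
  finally show ?thesis .
qed


definition g1 :: "int \<Rightarrow> int" where
  "g1 n = (if n mod 3 = 0 then 1 else if n mod 3 = 1 then 0 else -1)"
definition g2 :: "int \<Rightarrow> int" where
  "g2 n = (if n mod 3 = 0 then -(n div 3) else if n mod 3 = 1 then 2*(n div 3)+1 else -(n div 3)-1)"
definition zz :: "int \<Rightarrow> int" where
  "zz n = (if n mod 3 = 2 then -2 else 1)"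

lemma orbit3: "orbit h 3 n = - h n - 3 * h (n+1) - 3 * h (n+2) - h (n+3)"
  by (simp add: numeral_3_eq_3 algebra_simps)

lemma d3: "(3 * k + c) div 3 = k + c div 3" "(3 * k + c) mod 3 = c mod (3::int)"
  by simp_all

lemma split3:
  fixes n :: int
  obtains k where "n = 3*k" | k where "n = 3*k + 1" | k where "n = 3*k + 2"
proof -
  have "n = 3 * (n div 3) + n mod 3" by simp
  moreover have "n mod 3 = 0 \<or> n mod 3 = 1 \<or> n mod 3 = 2" by linarith
  ultimately show ?thesis
  proof (elim disjE)
    assume "n = 3 * (n div 3) + n mod 3" "n mod 3 = 0" then show ?thesis using that(1) by simp
  next
    assume "n = 3 * (n div 3) + n mod 3" "n mod 3 = 1" then show ?thesis using that(2) by simp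
  next
    assume "n = 3 * (n div 3) + n mod 3" "n mod 3 = 2" then show ?thesis using that(3) by simp
  qed
qed

lemma m3: "(3 * k) mod 3 = (0::int)" "(3 * k) div 3 = (k::int)"
  "(3*k + 1) mod 3 = (1::int)" "(3*k+1) div 3 = (k::int)" "(3*k + 2) mod 3 = (2::int)" "(3*k+2) div 3 = (k::int)"
  by simp_all

lemma g_3_all: "orbit g1 3 n = g1 n \<and> orbit zz 3 n = zz n \<and> orbit g2 3 n = g2 n + zz n"
proof (cases n rule: split3)
  case (1 k)
  have e: "3*k + 1 + 1 = 3*k + (2::int)" "3*k + 3 = 3*(k+1)" by simp_all
  show ?thesis unfolding orbit3 g1_def g2_def zz_def 1 e m3 by (simp add: algebra_simps)
next
  case (2 k)
  have e: "3*k + 1 + 1 = 3*k + (2::int)" "3*k + 1 + 2 = 3*(k+1)" "3*k + 1 + 3 = 3*(k+1) + 1" by simp_all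
  show ?thesis unfolding orbit3 g1_def g2_def zz_def 2 e m3 by (simp add: algebra_simps)
next
  case (3 k)
  have e: "3*k + 2 + 1 = 3*(k+1)" "3*k + 2 + 2 = 3*(k+1) + 1" "3*k + 2 + 3 = 3*(k+1) + 2" by simp_all
  show ?thesis unfolding orbit3 g1_def g2_def zz_def 3 e m3 by (simp add: algebra_simps)
qed

lemma g1_3: "orbit g1 3 n = g1 n" using g_3_all by blast
lemma zz_3: "orbit zz 3 n = zz n" using g_3_all by blast
lemma g2_3: "orbit g2 3 n = g2 n + zz n" using g_3_all by blast

lemma orbit_3c:
  "orbit g1 (3*c) n = g1 n \<and> orbit zz (3*c) n = zz n \<and> orbit g2 (3*c) n = g2 n + int c * zz n"
proof (induction c arbitrary: n)
  case 0 then show ?case by simp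
next
  case (Suc c)
  have e: "3 * Suc c = 3 * c + 3" by simp
  have a: "orbit g1 (3 * Suc c) n = g1 n"
    unfolding e orbit_add using Suc.IH by (simp add: g1_3 orbit_ext[OF g1_3])
  have b: "orbit zz (3 * Suc c) n = zz n"
    unfolding e orbit_add using Suc.IH by (simp add: orbit_ext[OF zz_3])
  have "orbit g2 (3 * Suc c) n = orbit (\<lambda>n. 1 * g2 n + 1 * zz n) (3 * c) n"
    unfolding e orbit_add by (rule orbit_ext) (simp add: g2_3)
  also have "\<dots> = g2 n + int (Suc c) * zz n"
    unfolding orbit_lin using Suc.IH by (simp add: algebra_simps)
  finally show ?case using a b by simp
qed

lemma len_A1 [simp]: "length A1 = 24" by (simp add: A1_def eval_nat_numeral)
lemma len_A2 [simp]: "length A2 = 24" by (simp add: A2_def)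


lemma mod3_24: "(24*q + c) mod 3 = c mod 3" "(24*q + c) div 3 = 8*q + c div (3::int)"
proof -
  have e: "24*q + c = 3*(8*q) + c" by simp
  show "(24*q + c) mod 3 = c mod 3" "(24*q + c) div 3 = 8*q + c div (3::int)" unfolding e d3 by simp_all
qed

lemma A1_explicit: "A1 = [1,0,-1,1,0,-1,1,0,-1,1,0,-1,1,0,-1,1,0,-1,1,0,-1,1,0,-1]"
  by (simp add: A1_def eval_nat_numeral)

lemma A12_g:
  assumes "s < 24"
  shows "A1!s + q*(A1!s + A1!(23-s)) = g1 (24*q + int s) \<and>
         A2!s + q*(A2!s + A2!(23-s)) = g2 (24*q + int s)"
proof -
  have "s < 24" using assms by simp
  then have "s = 0 \<or> s = 1 \<or> s = 2 \<or> s = 3 \<or> s = 4 \<or> s = 5 \<or> s = 6 \<or> s = 7 \<or> s = 8 \<or> s = 9 \<or> s = 10 \<or> s = 11 \<or> s = 12 \<or> s = 13 \<or> s = 14 \<or> s = 15 \<or> s = 16 \<or> s = 17 \<or> s = 18 \<or> s = 19 \<or> s = 20 \<or> s = 21 \<or> s = 22 \<or> s = 23"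
    by presburger
  then show ?thesis
    by (elim disjE; simp add: A1_explicit A2_def g1_def g2_def mod3_24; simp add: algebra_simps)
qed


lemma span_g:
  assumes A: "A = map2 (\<lambda>x y. a * x + b * y) A1 A2"
  shows "IAP A (rowmat A) n = a * g1 n + b * g2 n"
proof -
  define s where "s = nat (n mod 24)"
  define q where "q = n div 24"
  have s: "s < 24" unfolding s_def by linarith
  have n: "n = 24 * q + int s" unfolding s_def q_def by simp
  have l: "length A = 24" using A by simp
  have An: "\<And>i. i < 24 \<Longrightarrow> A ! i = a * A1 ! i + b * A2 ! i" using A by simp
  have "IAP A (rowmat A) n = A ! s + q * (A ! s + A ! (23 - s))"
    using s by (simp add: IAP_def s_def[symmetric] q_def[symmetric] rowmat_nth)
  also have "\<dots> = a * (A1!s + q*(A1!s + A1!(23-s))) + b * (A2!s + q*(A2!s + A2!(23-s)))"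
    using s by (simp add: An algebra_simps)
  also have "\<dots> = a * g1 n + b * g2 n"
    using A12_g[OF s, of q] n by simp
  finally show ?thesis .
qed

lemma span_in_P:
  assumes m: "m \<ge> 1" and A: "A \<in> span2 A1 A2"
  shows "A \<in> Pset m"
proof -
  obtain a b where A: "A = map2 (\<lambda>x y. a * x + b * y) A1 A2"
    using A unfolding span2_def by blast
  have l: "length A = 24" using A by simp
  define f where "f = IAP (redmod m A) (redmod m (rowmat (redmod m A)))"
  define g where "g = IAP A (rowmat A)"
  have g: "g n = a * g1 n + b * g2 n" for n unfolding g_def by (rule span_g[OF A])
  have fg: "[orbit f k j = orbit g k j] (mod int m)" for k j
    by (rule orbit_cong) (simp add: f_def g_def redmod_transfer[OF l])
  have g24: "orbit g (24 * m) n = 1 * g n + (8 * int m * b) * zz n" for n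
  proof -
    have "orbit g (24 * m) n = orbit (\<lambda>n. a * g1 n + b * g2 n) (3 * (8 * m)) n"
      by (simp add: orbit_ext[OF g])
    also have "\<dots> = a * g1 n + b * (g2 n + int (8 * m) * zz n)"
      unfolding orbit_lin using orbit_3c[of "8 * m" n] by simp
    finally show ?thesis by (simp add: g algebra_simps)
  qed
  have vert: "[orbit g (i + 24 * m) j = orbit g i j] (mod int m)" for i j
  proof -
    have "orbit g (i + 24 * m) j = orbit (\<lambda>n. 1 * g n + (8 * int m * b) * zz n) i j"
      by (simp add: orbit_add orbit_ext[OF g24])
    also have "\<dots> = orbit g i j + int m * (8 * b * orbit zz i j)"
      unfolding orbit_lin by (simp add: algebra_simps)
    finally show ?thesis by (simp add: cong_iff_dvd_diff)
  qed
  have hf: "[f (n + 24 * int m) = f n] (mod int m)" for n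
  proof -
    have "f (n + 24 * int m) = f n + int m * redmod m (rowmat (redmod m A)) ! nat (n mod 24)"
      unfolding f_def by (simp add: IAP_shift)
    then show ?thesis by (simp add: cong_iff_dvd_diff)
  qed
  have "periodic_mod m (24 * int m) (24 * m) (orbit f)"
    unfolding periodic_mod_def
  proof (intro allI conjI)
    fix i j
    show "[orbit f (i + 24 * m) j = orbit f i j] (mod int m)"
      by (rule cong_trans[OF cong_trans[OF fg vert] cong_sym[OF fg]])
    show "[orbit f i (j + 24 * int m) = orbit f i j] (mod int m)"
      by (rule orbit_hper) (rule hf)
  qed
  then show ?thesis using l unfolding Pset_def f_def by simp
qed


definition Ecal :: "int list \<Rightarrow> int \<Rightarrow> int" where
  "Ecal A j = 24 * (\<Sum>l\<le>24. int (24 choose l) * IAP A (rowmat A) (j + int l))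
     - (\<Sum>l\<le>24. int (24 choose l) * int l * rowmat A ! nat ((j + int l) mod 24))
     - 24 * IAP A (rowmat A) j"

lemma p2_mod24:
  fixes p :: nat
  assumes p: "prime p" "p \<ge> 5"
  shows "(p * p) mod 24 = 1"
proof -
  have n2: "\<not> 2 dvd p" and n3: "\<not> 3 dvd p" using p by (simp_all add: prime_nat_not_dvd)
  define r where "r = p mod 24"
  have r24: "r < 24" unfolding r_def by simp
  have r2: "r mod 2 = p mod 2" unfolding r_def by (simp add: mod_mod_cancel)
  have r3: "r mod 3 = p mod 3" unfolding r_def by (simp add: mod_mod_cancel)
  have "r mod 2 \<noteq> 0" "r mod 3 \<noteq> 0" using n2 n3 r2 r3 by (simp_all add: dvd_eq_mod_eq_0)
  moreover have "(p * p) mod 24 = (r * r) mod 24"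
    unfolding r_def by (simp add: mod_mult_eq)
  moreover have "r = 0 \<or> r = 1 \<or> r = 2 \<or> r = 3 \<or> r = 4 \<or> r = 5 \<or> r = 6 \<or> r = 7 \<or> r = 8 \<or> r = 9 \<or> r = 10 \<or> r = 11 \<or> r = 12 \<or> r = 13 \<or> r = 14 \<or> r = 15 \<or> r = 16 \<or> r = 17 \<or> r = 18 \<or> r = 19 \<or> r = 20 \<or> r = 21 \<or> r = 22 \<or> r = 23"
    using r24 by presburger
  ultimately show ?thesis by (elim disjE; simp)
qed

lemma Ecal_dvd:
  assumes p: "prime p" "p \<ge> 5" and A: "A \<in> Pset (p * p)"
  shows "int p dvd Ecal A j"
proof -
  have l: "length A = 24" using A by (simp add: Pset_def)
  have podd: "odd p" using p prime_odd_nat by auto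
  define f where "f = IAP (redmod (p*p) A) (redmod (p*p) (rowmat (redmod (p*p) A)))"
  define g where "g = IAP A (rowmat A)"
  define D where "D = (\<lambda>n. rowmat A ! nat (n mod 24))"
  have dv: "int p dvd int (p * p)" by simp
  have per: "[orbit f (0 + 24 * (p*p)) j = orbit f 0 j] (mod int (p*p))"
    using A unfolding Pset_def periodic_mod_def f_def by blast
  have fg0: "[f n = g n] (mod int (p*p))" for n
    unfolding f_def g_def by (rule redmod_transfer[OF l])
  have fg: "[orbit f k j = orbit g k j] (mod int p)" for k
    by (rule orbit_cong, rule cong_dvd_modulus[OF fg0 dv])
  have e1: "[orbit g (24 * p * p) j = g j] (mod int p)"
  proof -
    have "[orbit f (24 * p * p) j = f j] (mod int p)"
      using cong_dvd_modulus[OF per dv] by (simp add: mult.assoc)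
    moreover have "[f j = g j] (mod int p)"
      using fg[of 0] by simp
    ultimately show ?thesis using fg[of "24 * p * p"]
      by (blast intro: cong_trans cong_sym)
  qed
  have pp: "p * p = 24 * (p * p div 24) + 1"
    using mult_div_mod_eq[of 24 "p*p"] p2_mod24[OF p] by simp
  define t where "t = int (p * p div 24)"
  have t: "int (p * p) = 24 * t + 1"
    unfolding t_def by (subst pp) simp
  define G where "G = (\<Sum>l\<le>24. int (24 choose l) * g (j + int l))"
  define X where "X = (\<Sum>l\<le>24. int (24 choose l) * int l * D (j + int l))"
  have S: "orbit (\<lambda>k. g (j + k * int (p * p))) 24 0 = G + t * X"
  proof -
    have "orbit (\<lambda>k. g (j + k * int (p * p))) 24 0
        = (\<Sum>l\<le>24. int (24 choose l) * g (j + int l * int (p * p)))"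
      by (simp add: orbit_closed)
    also have "\<dots> = (\<Sum>l\<le>24. int (24 choose l) * (g (j + int l) + (int l * t) * D (j + int l)))"
    proof (rule sum.cong)
      fix l assume "l \<in> {..24::nat}"
      have eq: "j + int l * int (p * p) = (j + int l) + 24 * (int l * t)"
        unfolding t by (simp add: algebra_simps)
      show "int (24 choose l) * g (j + int l * int (p * p))
          = int (24 choose l) * (g (j + int l) + (int l * t) * D (j + int l))"
        by (simp only: eq g_def D_def IAP_shift)
    qed simp
    also have "\<dots> = G + t * X"
      by (simp add: G_def X_def sum.distrib sum_distrib_left algebra_simps)
    finally show ?thesis .
  qed
  have e2: "[orbit g (24 * p * p) j = G + t * X] (mod int p)"
    using orbit_iter2[OF p(1) podd, of g 24 j] S by simp
  have "[G + t * X = g j] (mod int p)"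
    by (rule cong_trans[OF cong_sym[OF e2] e1])
  then have d1: "int p dvd 24 * (G + t * X) - 24 * g j"
    by (metis cong_iff_dvd_diff cong_scalar_left)
  have d2: "int p dvd int (p * p) * X" by simp
  have "Ecal A j = (24 * (G + t * X) - 24 * g j) - int (p * p) * X"
    unfolding Ecal_def G_def X_def t g_def D_def by (simp add: algebra_simps)
  then show ?thesis using d1 d2 by simp
qed

lemma all_primes_zero:
  fixes x :: int
  assumes "\<And>p. prime p \<Longrightarrow> p \<ge> 5 \<Longrightarrow> int p dvd x"
  shows "x = 0"
proof (rule ccontr)
  assume x: "x \<noteq> 0"
  obtain p where p: "prime p" "p > nat \<bar>x\<bar> + 5" using bigger_prime by blast
  then have "int p dvd x" using assms by simp
  then have "\<bar>int p\<bar> \<le> \<bar>x\<bar>" using dvd_imp_le_int x by blast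
  then show False using p by linarith
qed

lemma Ecal_zero:
  assumes A: "A \<in> (\<Inter>m\<in>{m::nat. m \<ge> 1 \<and> odd m}. Pset m)"
  shows "length A = 24" "Ecal A j = 0"
proof -
  show "length A = 24" using A by (auto simp: Pset_def)
  show "Ecal A j = 0"
  proof (rule all_primes_zero)
    fix p :: nat assume p: "prime p" "p \<ge> 5"
    then have "odd p" using prime_odd_nat by auto
    moreover have "p * p \<ge> 1" using p by simp
    ultimately have "p * p \<in> {m::nat. m \<ge> 1 \<and> odd m}" by simp
    then have "A \<in> Pset (p * p)" using A by blast
    then show "int p dvd Ecal A j" by (rule Ecal_dvd[OF p])
  qed
qed


definition pstep :: "int list \<Rightarrow> int list" where
  "pstep r = map2 (+) (0 # r) (r @ [0])"

definition prow :: "nat \<Rightarrow> int list" where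
  "prow n = (pstep ^^ n) [1]"

lemma prow_0 [simp]: "prow 0 = [1]" by (simp add: prow_def)
lemma prow_Suc [simp]: "prow (Suc n) = map2 (+) (0 # prow n) (prow n @ [0])"
  by (simp add: prow_def pstep_def)

lemma prow_len: "length (prow n) = Suc n"
  by (induction n) auto

lemma prow_nth: "k \<le> n \<Longrightarrow> prow n ! k = int (n choose k)"
proof (induction n arbitrary: k)
  case 0 then show ?case by simp
next
  case (Suc n)
  have l: "length (prow n) = Suc n" by (rule prow_len)
  show ?case
  proof (cases k)
    case 0 then show ?thesis using l Suc.IH[of 0] by (simp add: nth_append)
  next
    case (Suc k')
    then have "prow (Suc n) ! k = (0 # prow n) ! k + (prow n @ [0]) ! k"
      using Suc.prems l by simp
    also have "\<dots> = int (n choose k') + int (n choose k)"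
      using Suc.IH Suc.prems l \<open>k = Suc k'\<close>
      by (cases "k \<le> n") (auto simp: nth_append)
    finally show ?thesis using \<open>k = Suc k'\<close> by simp
  qed
qed

lemma prow24: "prow 24 = [1,24,276,2024,10626,42504,134596,346104,735471,1307504,1961256,2496144,2704156,2496144,1961256,1307504,735471,346104,134596,42504,10626,2024,276,24,1]"
  by (simp add: prow_def eval_nat_numeral pstep_def)

lemma binom24_0: "int (24 choose 0) = 1"
  using prow_nth[of 0 24] unfolding prow24 by simp
lemma binom24_1: "int (24 choose 1) = 24"
  using prow_nth[of 1 24] unfolding prow24 by simp
lemma binom24_2: "int (24 choose 2) = 276"
  using prow_nth[of 2 24] unfolding prow24 by simp
lemma binom24_3: "int (24 choose 3) = 2024"
  using prow_nth[of 3 24] unfolding prow24 by simp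
lemma binom24_4: "int (24 choose 4) = 10626"
  using prow_nth[of 4 24] unfolding prow24 by simp
lemma binom24_5: "int (24 choose 5) = 42504"
  using prow_nth[of 5 24] unfolding prow24 by simp
lemma binom24_6: "int (24 choose 6) = 134596"
  using prow_nth[of 6 24] unfolding prow24 by simp
lemma binom24_7: "int (24 choose 7) = 346104"
  using prow_nth[of 7 24] unfolding prow24 by simp
lemma binom24_8: "int (24 choose 8) = 735471"
  using prow_nth[of 8 24] unfolding prow24 by simp
lemma binom24_9: "int (24 choose 9) = 1307504"
  using prow_nth[of 9 24] unfolding prow24 by simp
lemma binom24_10: "int (24 choose 10) = 1961256"
  using prow_nth[of 10 24] unfolding prow24 by simp
lemma binom24_11: "int (24 choose 11) = 2496144"
  using prow_nth[of 11 24] unfolding prow24 by simp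
lemma binom24_12: "int (24 choose 12) = 2704156"
  using prow_nth[of 12 24] unfolding prow24 by simp
lemma binom24_13: "int (24 choose 13) = 2496144"
  using prow_nth[of 13 24] unfolding prow24 by simp
lemma binom24_14: "int (24 choose 14) = 1961256"
  using prow_nth[of 14 24] unfolding prow24 by simp
lemma binom24_15: "int (24 choose 15) = 1307504"
  using prow_nth[of 15 24] unfolding prow24 by simp
lemma binom24_16: "int (24 choose 16) = 735471"
  using prow_nth[of 16 24] unfolding prow24 by simp
lemma binom24_17: "int (24 choose 17) = 346104"
  using prow_nth[of 17 24] unfolding prow24 by simp
lemma binom24_18: "int (24 choose 18) = 134596"
  using prow_nth[of 18 24] unfolding prow24 by simp
lemma binom24_19: "int (24 choose 19) = 42504"
  using prow_nth[of 19 24] unfolding prow24 by simp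
lemma binom24_20: "int (24 choose 20) = 10626"
  using prow_nth[of 20 24] unfolding prow24 by simp
lemma binom24_21: "int (24 choose 21) = 2024"
  using prow_nth[of 21 24] unfolding prow24 by simp
lemma binom24_22: "int (24 choose 22) = 276"
  using prow_nth[of 22 24] unfolding prow24 by simp
lemma binom24_23: "int (24 choose 23) = 24"
  using prow_nth[of 23 24] unfolding prow24 by simp
lemma binom24_24: "int (24 choose 24) = 1"
  using prow_nth[of 24 24] unfolding prow24 by simp
lemmas binom24 = binom24_0 binom24_1 binom24_2 binom24_3 binom24_4 binom24_5 binom24_6 binom24_7 binom24_8 binom24_9 binom24_10 binom24_11 binom24_12 binom24_13 binom24_14 binom24_15 binom24_16 binom24_17 binom24_18 binom24_19 binom24_20 binom24_21 binom24_22 binom24_23 binom24_24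

definition lin :: "int list \<Rightarrow> int list \<Rightarrow> int" where
  "lin c A = (\<Sum>i<24. c ! i * A ! i)"

lemma lin_zero: "lin [0,0,0,0,0,0,0,0,0,0,0,0,0,0,0,0,0,0,0,0,0,0,0,0] A = 0"
proof -
  have "([0,0,0,0,0,0,0,0,0,0,0,0,0,0,0,0,0,0,0,0,0,0,0,0]::int list) = replicate 24 0" by (simp add: eval_nat_numeral)
  then show ?thesis by (auto simp: lin_def intro!: sum.neutral)
qed

fun combv :: "int list \<Rightarrow> int list list \<Rightarrow> int list" where
  "combv (y # ys) (r # rs) = map2 (+) (map ((*) y) r) (combv ys rs)"
| "combv _ _ = [0,0,0,0,0,0,0,0,0,0,0,0,0,0,0,0,0,0,0,0,0,0,0,0]"

lemma combv_len: "(\<forall>r\<in>set rs. length r = 24) \<Longrightarrow> length (combv ys rs) = 24"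
  by (induction ys rs rule: combv.induct) auto

lemma combv_zero:
  "(\<forall>r\<in>set rs. length r = 24 \<and> lin r A = 0) \<Longrightarrow> lin (combv ys rs) A = 0"
proof (induction ys rs rule: combv.induct)
  case (1 y ys r rs)
  have l1: "length r = 24" and l2: "length (combv ys rs) = 24"
    using 1(2) combv_len[of rs ys] by auto
  have "lin (combv (y # ys) (r # rs)) A = y * lin r A + lin (combv ys rs) A"
    using l1 l2 by (simp add: lin_def sum.distrib sum_distrib_left algebra_simps)
  then show ?case using 1 by simp
qed (simp_all add: lin_zero)


definition vadd :: "int list \<Rightarrow> int list \<Rightarrow> int list" where "vadd u v = map2 (+) u v"
definition vsc :: "int \<Rightarrow> int list \<Rightarrow> int list" where "vsc c v = map ((*) c) v"

definition gvsq :: "nat \<Rightarrow> int \<Rightarrow> int list" where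
  "gvsq s q = map (\<lambda>i. (if i = s then 1 + q else 0) + (if i = 23 - s then q else 0)) [0..<24]"
definition dvs :: "nat \<Rightarrow> int list" where
  "dvs s = map (\<lambda>i. (if i = s then 1 else 0) + (if i = 23 - s then 1 else 0)) [0..<24]"
definition gv :: "int \<Rightarrow> int list" where "gv n = gvsq (nat (n mod 24)) (n div 24)"
definition dv :: "int \<Rightarrow> int list" where "dv n = dvs (nat (n mod 24))"

definition vsumg :: "int \<Rightarrow> int list" where
  "vsumg j = foldr (\<lambda>l acc. vadd (vsc (prow 24 ! l) (gv (j + int l))) acc) [0..<25] [0,0,0,0,0,0,0,0,0,0,0,0,0,0,0,0,0,0,0,0,0,0,0,0]"
definition vsumd :: "int \<Rightarrow> int list" where
  "vsumd j = foldr (\<lambda>l acc. vadd (vsc (prow 24 ! l * int l) (dv (j + int l))) acc) [0..<25] [0,0,0,0,0,0,0,0,0,0,0,0,0,0,0,0,0,0,0,0,0,0,0,0]"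
definition ecv :: "int \<Rightarrow> int list" where
  "ecv j = vadd (vadd (vsc 24 (vsumg j)) (vsc (-1) (vsumd j))) (vsc (-24) (gv j))"


lemma len_vadd [simp]: "length (vadd u v) = min (length u) (length v)" by (simp add: vadd_def)
lemma len_vsc [simp]: "length (vsc c v) = length v" by (simp add: vsc_def)
lemma len_gv [simp]: "length (gv n) = 24" by (simp add: gv_def gvsq_def)
lemma len_dv [simp]: "length (dv n) = 24" by (simp add: dv_def dvs_def)

lemma lin_vadd:
  assumes "length u = 24" "length v = 24"
  shows "lin (vadd u v) A = lin u A + lin v A"
proof -
  have "lin (vadd u v) A = (\<Sum>i<24. (u ! i + v ! i) * A ! i)"
    unfolding lin_def vadd_def by (rule sum.cong) (use assms in auto)
  then show ?thesis by (simp add: lin_def algebra_simps sum.distrib)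
qed

lemma lin_vsc:
  assumes "length v = 24"
  shows "lin (vsc c v) A = c * lin v A"
proof -
  have "lin (vsc c v) A = (\<Sum>i<24. c * (v ! i * A ! i))"
    unfolding lin_def vsc_def by (rule sum.cong) (use assms in auto)
  then show ?thesis by (simp add: lin_def sum_distrib_left)
qed

lemma lin_gv:
  assumes "length A = 24"
  shows "lin (gv n) A = IAP A (rowmat A) n"
proof -
  define s where "s = nat (n mod 24)"
  define q where "q = n div 24"
  have s: "s < 24" unfolding s_def by linarith
  have "lin (gv n) A = (\<Sum>i<24. (if i = s then (1 + q) * A ! i else 0) + (if i = 23 - s then q * A ! i else 0))"
    unfolding lin_def gv_def gvsq_def s_def[symmetric] q_def[symmetric]
    by (rule sum.cong) (auto simp: algebra_simps)
  also have "\<dots> = (1 + q) * A ! s + q * A ! (23 - s)"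
    using s by (simp add: sum.distrib)
  also have "\<dots> = IAP A (rowmat A) n"
    using s by (simp add: IAP_def s_def[symmetric] q_def[symmetric] rowmat_nth algebra_simps)
  finally show ?thesis .
qed

lemma lin_dv:
  assumes "length A = 24"
  shows "lin (dv n) A = rowmat A ! nat (n mod 24)"
proof -
  define s where "s = nat (n mod 24)"
  have s: "s < 24" unfolding s_def by linarith
  have "lin (dv n) A = (\<Sum>i<24. (if i = s then A ! i else 0) + (if i = 23 - s then A ! i else 0))"
    unfolding lin_def dv_def dvs_def s_def[symmetric]
    by (rule sum.cong) auto
  also have "\<dots> = A ! s + A ! (23 - s)"
    using s by (simp add: sum.distrib)
  also have "\<dots> = rowmat A ! nat (n mod 24)"
    using s by (simp add: s_def[symmetric] rowmat_nth)
  finally show ?thesis .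
qed

lemma Z24_len: "length ([0,0,0,0,0,0,0,0,0,0,0,0,0,0,0,0,0,0,0,0,0,0,0,0]::int list) = 24" by simp

lemma lin_foldr:
  assumes "\<And>l. length (v l) = 24"
  shows "length (foldr (\<lambda>l acc. vadd (vsc (c l) (v l)) acc) L [0,0,0,0,0,0,0,0,0,0,0,0,0,0,0,0,0,0,0,0,0,0,0,0]) = 24 \<and>
         lin (foldr (\<lambda>l acc. vadd (vsc (c l) (v l)) acc) L [0,0,0,0,0,0,0,0,0,0,0,0,0,0,0,0,0,0,0,0,0,0,0,0]) A = (\<Sum>l\<leftarrow>L. c l * lin (v l) A)"
proof (induction L)
  case Nil then show ?case by (simp add: lin_zero)
next
  case (Cons a L)
  then show ?case using assms by (simp add: lin_vadd lin_vsc)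
qed

lemma sum24: "(\<Sum>l\<leftarrow>[0..<25]. f l) = (\<Sum>l\<le>24. f l)"
proof -
  have "set [0..<25] = {..24::nat}" by auto
  then show ?thesis by (simp add: interv_sum_list_conv_sum_set_nat)
qed

lemma Ecal_lin:
  assumes A: "length A = 24"
  shows "Ecal A j = lin (ecv j) A"
proof -
  have p: "l \<le> 24 \<Longrightarrow> prow 24 ! l = int (24 choose l)" for l by (rule prow_nth)
  have g: "lin (vsumg j) A = (\<Sum>l\<le>24. int (24 choose l) * IAP A (rowmat A) (j + int l))"
    unfolding vsumg_def using lin_foldr[of "\<lambda>l. gv (j + int l)" "\<lambda>l. prow 24 ! l" "[0..<25]" A]
    by (simp add: sum24 lin_gv[OF A] p)
  have d: "lin (vsumd j) A = (\<Sum>l\<le>24. int (24 choose l) * int l * rowmat A ! nat ((j + int l) mod 24))"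
    unfolding vsumd_def using lin_foldr[of "\<lambda>l. dv (j + int l)" "\<lambda>l. prow 24 ! l * int l" "[0..<25]" A]
    by (simp add: sum24 lin_dv[OF A] p)
  have lg: "length (vsumg j) = 24"
    unfolding vsumg_def using lin_foldr[of "\<lambda>l. gv (j + int l)" "\<lambda>l. prow 24 ! l" "[0..<25]" A] by simp
  have ld: "length (vsumd j) = 24"
    unfolding vsumd_def using lin_foldr[of "\<lambda>l. dv (j + int l)" "\<lambda>l. prow 24 ! l * int l" "[0..<25]" A] by simp
  show ?thesis
    unfolding ecv_def using lg ld
    by (simp add: lin_vadd lin_vsc g d lin_gv[OF A] Ecal_def)
qed

lemma upt24: "[0..<24] = [0,1,2,3,4,5,6,7,8,9,10,11,12,13,14,15,16,17,18,19,20,21,22,23]" by (simp add: upt_rec)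
lemma upt25: "[0..<25] = [0,1,2,3,4,5,6,7,8,9,10,11,12,13,14,15,16,17,18,19,20,21,22,23,24]" by (simp add: upt_rec)


lemma ecv_0: "ecv 0 = [-528,-5520,-36432,-170016,-595056,-1615152,-3461040,-5883768,-7845024,-7845024,-4992288,0,4992288,7845024,7845024,5883768,3461040,1615152,595056,170016,36432,5520,528,24]"
  by (simp add: ecv_def vsumg_def vsumd_def gv_def dv_def gvsq_def dvs_def vadd_def vsc_def prow24 upt24 upt25)

lemma ecv_1: "ecv 1 = [-5472,-42480,-211968,-801504,-2380224,-5671248,-10959960,-17189832,-21573816,-20682336,-12837312,0,12837312,20682336,21573816,17189832,10959960,5671248,2380224,801504,211968,42480,6072,576]"
  by (simp add: ecv_def vsumg_def vsumd_def gv_def dv_def gvsq_def dvs_def vadd_def vsc_def prow24 upt24 upt25)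

lemma ecv_2: "ecv 2 = [-35328,-211920,-807552,-2422176,-5877696,-11725032,-19400040,-26650008,-30027144,-26566104,-15690048,0,15690048,26566104,30027144,26650008,19400040,11725032,5877696,2422176,807552,212520,42528,6624]"
  by (simp add: ecv_def vsumg_def vsumd_def gv_def dv_def gvsq_def dvs_def vadd_def vsc_def prow24 upt24 upt25)

lemma ecv_3: "ecv 3 = [-157872,-800400,-2422128,-5883744,-11766984,-19606488,-27415080,-32237352,-31642296,-25034856,-13728792,0,13728792,25034856,31642296,32237352,27415080,19606488,11766984,5883744,2422728,807600,213072,48576]"
  by (simp add: ecv_def vsumg_def vsumd_def gv_def dv_def gvsq_def dvs_def vadd_def vsc_def prow24 upt24 upt25)

lemma ecv_4: "ecv 4 = [-510048,-2368080,-5876592,-11766936,-19612536,-27457032,-32443800,-32407368,-27245064,-18804984,-9344808,0,9344808,18804984,27245064,32407368,32443800,27457032,19612536,11767536,5883792,2423280,813648,255024]"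
  by (simp add: ecv_def vsumg_def vsumd_def gv_def dv_def gvsq_def dvs_def vadd_def vsc_def prow24 upt24 upt25)

lemma ecv_5: "ecv 5 = [-1190112,-5586240,-11712888,-19605384,-27456984,-32449848,-32449320,-27451512,-19570056,-11555016,-5076192,0,5076192,11555016,19570056,27451512,32449320,32449848,27457584,19612584,11768088,5889840,2465232,1020096]"
  by (simp add: ecv_def vsumg_def vsumd_def gv_def dv_def gvsq_def dvs_def vadd_def vsc_def prow24 upt24 upt25)

lemma ecv_6: "ecv 6 = [-1845888,-10534920,-19315032,-27402936,-32442696,-32449272,-27457560,-19612008,-11761464,-5841264,-2210208,0,2210208,5841264,11761464,19612008,27457560,32449872,32449896,27458136,19618632,11810040,6096288,3230304]"
  by (simp add: ecv_def vsumg_def vsumd_def gv_def dv_def gvsq_def dvs_def vadd_def vsc_def prow24 upt24 upt25)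

lemma ecv_7: "ecv 7 = [-1038312,-15574680,-26224968,-32152344,-32395224,-27450408,-19611960,-11767512,-5883216,-2416656,-765072,0,765072,2416656,5883216,11767512,19612560,27457608,32450424,32455944,27500088,19825080,12575112,8306496]"
  by (simp add: ecv_def vsumg_def vsumd_def gv_def dv_def gvsq_def dvs_def vadd_def vsc_def prow24 upt24 upt25)

lemma ecv_8: "ecv 8 = [3922512,-16728360,-28411992,-31217256,-27160056,-19557912,-11760360,-5883168,-2422704,-807024,-206448,0,206448,807024,2422704,5883768,11767560,19613112,27463656,32492376,32662392,28265160,22035288,17651304]"
  by (simp add: ecv_def vsumg_def vsumd_def gv_def dv_def gvsq_def dvs_def vadd_def vsc_def prow24 upt24 upt25)

lemma ecv_9: "ecv 9 = [15690048,-8914800,-21720648,-23419704,-18379944,-11470008,-5829120,-2415552,-806976,-212496,-41952,0,41952,212496,807576,2422752,5884320,11773608,19655064,27670104,33257448,34872600,33341352,31380096]"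
  by (simp add: ecv_def vsumg_def vsumd_def gv_def dv_def gvsq_def dvs_def vadd_def vsc_def prow24 upt24 upt25)

lemma ecv_10: "ecv 10 = [34232832,10697760,-3922512,-8883336,-7729656,-4651152,-2125200,-752928,-205344,-41904,-6048,0,6048,42504,212544,808128,2428800,5926272,11980056,20420136,29880312,38333640,44217408,47070144]"
  by (simp add: ecv_def vsumg_def vsumd_def gv_def dv_def gvsq_def dvs_def vadd_def vsc_def prow24 upt24 upt25)

lemma ecv_11: "ecv 11 = [54915168,39225120,23535072,11767536,4845456,1615152,425040,85008,12144,1104,48,0,552,6096,43056,218592,850080,2635248,6691344,14190264,25496328,39225120,52062432,59907456]"
  by (simp add: ecv_def vsumg_def vsumd_def gv_def dv_def gvsq_def dvs_def vadd_def vsc_def prow24 upt24 upt25)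

lemma ecv_12: "ecv 12 = [69892032,67752480,54915168,37263864,21112344,9921648,3825360,1190112,291456,54096,7152,600,48,1104,12144,85008,425040,1615152,4845456,11767536,23535072,39225120,54915168,64899744]"
  by (simp add: ecv_def vsumg_def vsumd_def gv_def dv_def gvsq_def dvs_def vadd_def vsc_def prow24 upt24 upt25)

lemma ecv_13: "ecv 13 = [72744768,85582080,81481272,64259976,42340056,23322552,10686720,4031808,1232064,297504,54648,7200,1152,6096,43056,218592,850080,2635248,6691344,14190264,25496328,39225120,52062432,59907456]"
  by (simp add: ecv_def vsumg_def vsumd_def gv_def dv_def gvsq_def dvs_def vadd_def vsc_def prow24 upt24 upt25)

lemma ecv_14: "ecv 14 = [62760192,86473560,94926888,86557464,66470184,43105128,23529000,10728672,4037856,1232616,297552,55200,13248,43104,212544,808128,2428800,5926272,11980056,20420136,29880312,38333640,44217408,47070144]"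
  by (simp add: ecv_def vsumg_def vsumd_def gv_def dv_def gvsq_def dvs_def vadd_def vsc_def prow24 upt24 upt25)

lemma ecv_15: "ecv 15 = [45108888,72105000,91549752,97137096,87322536,66676632,43147080,23535048,10729224,4037904,1233168,303600,97152,219696,808176,2422752,5884320,11773608,19655064,27670104,33257448,34872600,33341352,31380096]"
  by (simp add: ecv_def vsumg_def vsumd_def gv_def dv_def gvsq_def dvs_def vadd_def vsc_def prow24 upt24 upt25)

lemma ecv_16: "ecv 16 = [26996112,50185080,74315208,92314824,97343544,87364488,66682680,43147632,23535096,10729776,4043952,1275120,510048,862224,2429904,5884368,11767560,19613112,27463656,32492376,32662392,28265160,22035288,17651304]"
  by (simp add: ecv_def vsumg_def vsumd_def gv_def dv_def gvsq_def dvs_def vadd_def vsc_def prow24 upt24 upt25)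

lemma ecv_17: "ecv 17 = [13382688,29206320,50950152,74521656,92356776,97349592,87365040,66682728,43148184,23541144,10771728,4250400,2040192,2720256,5938416,11774712,19613160,27457608,32450424,32455944,27500088,19825080,12575112,8306496]"
  by (simp add: ecv_def vsumg_def vsumd_def gv_def dv_def gvsq_def dvs_def vadd_def vsc_def prow24 upt24 upt25)

lemma ecv_18: "ecv 18 = [5440512,14147760,29412768,50992104,74527704,92357328,97349640,87365592,66688776,43190136,23747592,11536800,6460608,7116384,12065064,19667208,27464760,32450472,32449896,27458136,19618632,11810040,6096288,3230304]"
  by (simp add: ecv_def vsumg_def vsumd_def gv_def dv_def gvsq_def dvs_def vadd_def vsc_def prow24 upt24 upt25)

lemma ecv_19: "ecv 19 = [1785168,5646960,14189712,29418816,50992656,74527752,92357880,97355688,87407544,66895224,43955208,25957800,16612992,15805416,20845176,27755112,32504520,32457048,27458184,19612584,11768088,5889840,2465232,1020096]"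
  by (simp add: ecv_def vsumg_def vsumd_def gv_def dv_def gvsq_def dvs_def vadd_def vsc_def prow24 upt24 upt25)

lemma ecv_20: "ecv 20 = [461472,1827120,5653008,14190264,29418864,50993208,74533800,92399832,97562136,88172616,69105432,49031400,35302608,30341784,31495464,33682488,32747400,27512232,19619736,11768136,5883792,2423280,813648,255024]"
  by (simp add: ecv_def vsumg_def vsumd_def gv_def dv_def gvsq_def dvs_def vadd_def vsc_def prow24 upt24 upt25)

lemma ecv_21: "ecv 21 = [90528,467520,1827672,5653056,14190816,29424912,51035160,74740248,93164904,99772344,93248808,78450240,62760192,50992656,43179096,36487752,28690200,19910088,11822184,5890944,2423328,807600,213072,48576]"
  by (simp add: ecv_def vsumg_def vsumd_def gv_def dv_def gvsq_def dvs_def vadd_def vsc_def prow24 upt24 upt25)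

lemma ecv_22: "ecv 22 = [12672,91080,467568,1828224,5659104,14232768,29631360,51800232,76950456,98241096,109117152,106977600,94140288,75597504,55984944,38186808,23650440,13000152,6181296,2477376,814752,213120,42528,6624]"
  by (simp add: ecv_def vsumg_def vsumd_def gv_def dv_def gvsq_def dvs_def vadd_def vsc_def prow24 upt24 upt25)

lemma ecv_23: "ecv 23 = [1128,12720,91632,473616,1870176,5865552,14997840,31841568,56876424,86295264,111969888,124807200,119814912,99132576,70605216,43147632,22496760,9921648,3655344,1105104,267168,49680,6672,576]"
  by (simp add: ecv_def vsumg_def vsumd_def gv_def dv_def gvsq_def dvs_def vadd_def vsc_def prow24 upt24 upt25)

definition EM :: "int list list" where
  "EM = [[-528,-5520,-36432,-170016,-595056,-1615152,-3461040,-5883768,-7845024,-7845024,-4992288,0,4992288,7845024,7845024,5883768,3461040,1615152,595056,170016,36432,5520,528,24],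
   [-5472,-42480,-211968,-801504,-2380224,-5671248,-10959960,-17189832,-21573816,-20682336,-12837312,0,12837312,20682336,21573816,17189832,10959960,5671248,2380224,801504,211968,42480,6072,576],
   [-35328,-211920,-807552,-2422176,-5877696,-11725032,-19400040,-26650008,-30027144,-26566104,-15690048,0,15690048,26566104,30027144,26650008,19400040,11725032,5877696,2422176,807552,212520,42528,6624],
   [-157872,-800400,-2422128,-5883744,-11766984,-19606488,-27415080,-32237352,-31642296,-25034856,-13728792,0,13728792,25034856,31642296,32237352,27415080,19606488,11766984,5883744,2422728,807600,213072,48576],
   [-510048,-2368080,-5876592,-11766936,-19612536,-27457032,-32443800,-32407368,-27245064,-18804984,-9344808,0,9344808,18804984,27245064,32407368,32443800,27457032,19612536,11767536,5883792,2423280,813648,255024],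
   [-1190112,-5586240,-11712888,-19605384,-27456984,-32449848,-32449320,-27451512,-19570056,-11555016,-5076192,0,5076192,11555016,19570056,27451512,32449320,32449848,27457584,19612584,11768088,5889840,2465232,1020096],
   [-1845888,-10534920,-19315032,-27402936,-32442696,-32449272,-27457560,-19612008,-11761464,-5841264,-2210208,0,2210208,5841264,11761464,19612008,27457560,32449872,32449896,27458136,19618632,11810040,6096288,3230304],
   [-1038312,-15574680,-26224968,-32152344,-32395224,-27450408,-19611960,-11767512,-5883216,-2416656,-765072,0,765072,2416656,5883216,11767512,19612560,27457608,32450424,32455944,27500088,19825080,12575112,8306496],
   [3922512,-16728360,-28411992,-31217256,-27160056,-19557912,-11760360,-5883168,-2422704,-807024,-206448,0,206448,807024,2422704,5883768,11767560,19613112,27463656,32492376,32662392,28265160,22035288,17651304],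
   [15690048,-8914800,-21720648,-23419704,-18379944,-11470008,-5829120,-2415552,-806976,-212496,-41952,0,41952,212496,807576,2422752,5884320,11773608,19655064,27670104,33257448,34872600,33341352,31380096],
   [34232832,10697760,-3922512,-8883336,-7729656,-4651152,-2125200,-752928,-205344,-41904,-6048,0,6048,42504,212544,808128,2428800,5926272,11980056,20420136,29880312,38333640,44217408,47070144],
   [54915168,39225120,23535072,11767536,4845456,1615152,425040,85008,12144,1104,48,0,552,6096,43056,218592,850080,2635248,6691344,14190264,25496328,39225120,52062432,59907456],
   [69892032,67752480,54915168,37263864,21112344,9921648,3825360,1190112,291456,54096,7152,600,48,1104,12144,85008,425040,1615152,4845456,11767536,23535072,39225120,54915168,64899744],
   [72744768,85582080,81481272,64259976,42340056,23322552,10686720,4031808,1232064,297504,54648,7200,1152,6096,43056,218592,850080,2635248,6691344,14190264,25496328,39225120,52062432,59907456],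
   [62760192,86473560,94926888,86557464,66470184,43105128,23529000,10728672,4037856,1232616,297552,55200,13248,43104,212544,808128,2428800,5926272,11980056,20420136,29880312,38333640,44217408,47070144],
   [45108888,72105000,91549752,97137096,87322536,66676632,43147080,23535048,10729224,4037904,1233168,303600,97152,219696,808176,2422752,5884320,11773608,19655064,27670104,33257448,34872600,33341352,31380096],
   [26996112,50185080,74315208,92314824,97343544,87364488,66682680,43147632,23535096,10729776,4043952,1275120,510048,862224,2429904,5884368,11767560,19613112,27463656,32492376,32662392,28265160,22035288,17651304],
   [13382688,29206320,50950152,74521656,92356776,97349592,87365040,66682728,43148184,23541144,10771728,4250400,2040192,2720256,5938416,11774712,19613160,27457608,32450424,32455944,27500088,19825080,12575112,8306496],
   [5440512,14147760,29412768,50992104,74527704,92357328,97349640,87365592,66688776,43190136,23747592,11536800,6460608,7116384,12065064,19667208,27464760,32450472,32449896,27458136,19618632,11810040,6096288,3230304],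
   [1785168,5646960,14189712,29418816,50992656,74527752,92357880,97355688,87407544,66895224,43955208,25957800,16612992,15805416,20845176,27755112,32504520,32457048,27458184,19612584,11768088,5889840,2465232,1020096],
   [461472,1827120,5653008,14190264,29418864,50993208,74533800,92399832,97562136,88172616,69105432,49031400,35302608,30341784,31495464,33682488,32747400,27512232,19619736,11768136,5883792,2423280,813648,255024],
   [90528,467520,1827672,5653056,14190816,29424912,51035160,74740248,93164904,99772344,93248808,78450240,62760192,50992656,43179096,36487752,28690200,19910088,11822184,5890944,2423328,807600,213072,48576],
   [12672,91080,467568,1828224,5659104,14232768,29631360,51800232,76950456,98241096,109117152,106977600,94140288,75597504,55984944,38186808,23650440,13000152,6181296,2477376,814752,213120,42528,6624],
   [1128,12720,91632,473616,1870176,5865552,14997840,31841568,56876424,86295264,111969888,124807200,119814912,99132576,70605216,43147632,22496760,9921648,3655344,1105104,267168,49680,6672,576]]"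

lemma EM_ecv: "EM = [ecv 0, ecv 1, ecv 2, ecv 3, ecv 4, ecv 5, ecv 6, ecv 7, ecv 8, ecv 9, ecv 10, ecv 11, ecv 12, ecv 13, ecv 14, ecv 15, ecv 16, ecv 17, ecv 18, ecv 19, ecv 20, ecv 21, ecv 22, ecv 23]"
  unfolding EM_def ecv_0 ecv_1 ecv_2 ecv_3 ecv_4 ecv_5 ecv_6 ecv_7 ecv_8 ecv_9 ecv_10 ecv_11 ecv_12 ecv_13 ecv_14 ecv_15 ecv_16 ecv_17 ecv_18 ecv_19 ecv_20 ecv_21 ecv_22 ecv_23 by (rule refl)

lemma len_ecv: "length (ecv j) = 24"
  by (simp add: ecv_def vsumg_def vsumd_def lin_foldr)

lemma cert_2: "combv [-117464174742,101199806484,-73937994919,43875894956,-18736017655,2971334855,3246665408,-3053655703,650607835,939856000,-916238770,128153801,363826883,-278522278,-5279222,123127117,-62062447,-15127978,27050753,-6339703,-4015822,2007911,0,0] EM = [8465380035840,8465380035840,8465380035840,0,0,0,0,0,0,0,0,0,0,0,0,0,0,0,0,0,0,0,0,0]"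
  by (simp add: EM_def)

lemma lin_cert_2: "lin [8465380035840,8465380035840,8465380035840,0,0,0,0,0,0,0,0,0,0,0,0,0,0,0,0,0,0,0,0,0] A = (8465380035840) * (A ! 2 - (-1) * A ! 0 - (-1) * A ! 1)"
  by (simp add: lin_def lessThan_nat_numeral algebra_simps)

lemma cert_3: "combv [336176345832,-292603984056,218971530228,-136507741399,65581239555,-18496829500,-3292843858,6948921035,-2794526203,-1175368270,1982240660,-704660620,-490100428,635062028,-168187138,-172397587,168053675,-31931182,-36470968,27366723,-6339703,0,0,0] EM = [-8465380035840,8465380035840,0,8465380035840,0,0,0,0,0,0,0,0,0,0,0,0,0,0,0,0,0,0,0,0]"
  by (simp add: EM_def)

lemma lin_cert_3: "lin [-8465380035840,8465380035840,0,8465380035840,0,0,0,0,0,0,0,0,0,0,0,0,0,0,0,0,0,0,0,0] A = (8465380035840) * (A ! 3 - (1) * A ! 0 - (-1) * A ! 1)"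
  by (simp add: lin_def lessThan_nat_numeral algebra_simps)

lemma cert_4: "combv [-393851980404,352748263092,-281235735617,196800979871,-117532535589,56345725987,-18041239281,19941345,4472337095,-2691997543,-47551350,1235832630,-797252358,-101243010,473222885,-246387697,-80203875,161838663,-58665965,-30131265,35398367,-10355525,0,0] EM = [0,-25396140107520,0,0,8465380035840,0,0,0,0,0,0,0,0,0,0,0,0,0,0,0,0,0,0,0]"
  by (simp add: EM_def)

lemma lin_cert_4: "lin [0,-25396140107520,0,0,8465380035840,0,0,0,0,0,0,0,0,0,0,0,0,0,0,0,0,0,0,0] A = (8465380035840) * (A ! 4 - (0) * A ! 0 - (3) * A ! 1)"
  by (simp add: lin_def lessThan_nat_numeral algebra_simps)

lemma cert_5: "combv [57782840838,-78873956988,108981194003,-130850310964,131367768863,-107976541355,69212107964,-29668434805,2229626385,8264389140,-6176766358,368584615,2591904397,-1784302810,-102081510,841598223,-428434525,-90189442,187197475,-59297905,-15127978,10355525,0,0] EM = [8465380035840,16930760071680,0,0,0,8465380035840,0,0,0,0,0,0,0,0,0,0,0,0,0,0,0,0,0,0]"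
  by (simp add: EM_def)

lemma lin_cert_5: "lin [8465380035840,16930760071680,0,0,0,8465380035840,0,0,0,0,0,0,0,0,0,0,0,0,0,0,0,0,0,0] A = (8465380035840) * (A ! 5 - (-1) * A ! 0 - (-2) * A ! 1)"
  by (simp add: lin_def lessThan_nat_numeral algebra_simps)

lemma cert_6: "combv [492372064662,-388394196744,219169991478,-43986340892,-83832636945,138105081680,-125910668245,77518748885,-27332931305,-2979521555,10502647120,-5201268493,-1221853303,3137754928,-1498568753,-437182847,945382025,-434952907,-82789738,204524643,-107375678,22278300,0,0] EM = [-8465380035840,16930760071680,0,0,0,0,8465380035840,0,0,0,0,0,0,0,0,0,0,0,0,0,0,0,0,0]"
  by (simp add: EM_def)

lemma lin_cert_6: "lin [-8465380035840,16930760071680,0,0,0,0,8465380035840,0,0,0,0,0,0,0,0,0,0,0,0,0,0,0,0,0] A = (8465380035840) * (A ! 6 - (1) * A ! 0 - (-2) * A ! 1)"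
  by (simp add: lin_def lessThan_nat_numeral algebra_simps)

lemma cert_7: "combv [-703086073560,587994121860,-393953586101,178903719885,200728935,-108110442945,140319401185,-117490131639,70674210775,-26640210825,-193824450,8388562000,-5115732128,-401352990,2612707335,-1440534485,-341854635,849367885,-338057445,-140466405,183127665,-54912125,0,0] EM = [0,-42326900179200,0,0,0,0,0,8465380035840,0,0,0,0,0,0,0,0,0,0,0,0,0,0,0,0]"
  by (simp add: EM_def)

lemma lin_cert_7: "lin [0,-42326900179200,0,0,0,0,0,8465380035840,0,0,0,0,0,0,0,0,0,0,0,0,0,0,0,0] A = (8465380035840) * (A ! 7 - (0) * A ! 0 - (5) * A ! 1)"
  by (simp add: lin_def lessThan_nat_numeral algebra_simps)

lemma cert_8: "combv [210069366048,-202591518372,179191030297,-131540196119,61000737735,18260140965,-84444997549,118261496685,-112720690109,77335506005,-33280577670,1191426420,10369251228,-6978478986,124494293,2829462007,-1791948735,8873687,597472233,-336240813,56654413,6152545,0,0] EM = [8465380035840,25396140107520,0,0,0,0,0,0,8465380035840,0,0,0,0,0,0,0,0,0,0,0,0,0,0,0]"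
  by (simp add: EM_def)

lemma lin_cert_8: "lin [8465380035840,25396140107520,0,0,0,0,0,0,8465380035840,0,0,0,0,0,0,0,0,0,0,0,0,0,0,0] A = (8465380035840) * (A ! 8 - (-1) * A ! 0 - (-3) * A ! 1)"
  by (simp add: lin_def lessThan_nat_numeral algebra_simps)

lemma cert_9: "combv [642965374446,-502339297512,281506652922,-70210433276,-57278883669,75641432756,-13427013949,-70520741455,122878680235,-122088336779,81463320640,-31758180385,-1688970547,11724512800,-6801259553,-540928403,3360225125,-2035375723,-33546670,807459615,-519626102,124000440,0,0] EM = [-8465380035840,25396140107520,0,0,0,0,0,0,0,8465380035840,0,0,0,0,0,0,0,0,0,0,0,0,0,0]"
  by (simp add: EM_def)

lemma lin_cert_9: "lin [-8465380035840,25396140107520,0,0,0,0,0,0,0,8465380035840,0,0,0,0,0,0,0,0,0,0,0,0,0,0] A = (8465380035840) * (A ! 9 - (1) * A ! 0 - (-3) * A ! 1)"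
  by (simp add: lin_def lessThan_nat_numeral algebra_simps)

lemma cert_10: "combv [-500002751610,411670062924,-266265392784,113372144872,257157135,-50056025534,41028850273,113568135,-41850109115,63023466735,-58970611812,38355228495,-15003197091,-400092360,4979461905,-2761936913,-361084245,1309593031,-581268980,-160956645,257425894,-79900530,0,0] EM = [0,-29628830125440,0,0,0,0,0,0,0,0,4232690017920,0,0,0,0,0,0,0,0,0,0,0,0,0]"
  by (simp add: EM_def)

lemma lin_cert_10: "lin [0,-29628830125440,0,0,0,0,0,0,0,0,4232690017920,0,0,0,0,0,0,0,0,0,0,0,0,0] A = (4232690017920) * (A ! 10 - (0) * A ! 0 - (7) * A ! 1)"
  by (simp add: lin_def lessThan_nat_numeral algebra_simps)

lemma cert_11: "combv [354295805988,-321638544828,254367620497,-158030595590,52918799820,30606345125,-66607662073,47662434910,10346660250,-75371128975,115040199490,-113374748094,78228418278,-33561838058,1878455993,9201364002,-6539548958,1003579787,1561368353,-1339722648,489204178,-74496455,0,0] EM = [8465380035840,33861520143360,0,0,0,0,0,0,0,0,0,8465380035840,0,0,0,0,0,0,0,0,0,0,0,0]"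
  by (simp add: EM_def)

lemma lin_cert_11: "lin [8465380035840,33861520143360,0,0,0,0,0,0,0,0,0,8465380035840,0,0,0,0,0,0,0,0,0,0,0,0] A = (8465380035840) * (A ! 11 - (-1) * A ! 0 - (-4) * A ! 1)"
  by (simp add: lin_def lessThan_nat_numeral algebra_simps)

lemma cert_12: "combv [792139936452,-619401428844,350178050381,-96525874806,-52919997660,75878785585,-18116518333,-44199018826,54506539650,-5536944555,-67065201910,116939503034,-119279456962,82095644558,-33627812883,-300195702,11249858522,-7089876025,271213357,2472341088,-1689518238,417484229,0,0] EM = [-8465380035840,33861520143360,0,0,0,0,0,0,0,0,0,0,8465380035840,0,0,0,0,0,0,0,0,0,0,0]"
  by (simp add: EM_def)

lemma lin_cert_12: "lin [-8465380035840,33861520143360,0,0,0,0,0,0,0,0,0,0,8465380035840,0,0,0,0,0,0,0,0,0,0,0] A = (8465380035840) * (A ! 12 - (1) * A ! 0 - (-4) * A ! 1)"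
  by (simp add: lin_def lessThan_nat_numeral algebra_simps)

lemma cert_13: "combv [-642980425410,529369910748,-341655056640,144276118648,480348675,-60521458330,46407741661,262362495,-34473659203,32657653075,-195085080,-39246168365,62180616265,-59324413452,38090375845,-14157234385,-509878605,4036549315,-1891100464,-235353825,582115870,-185300370,0,0] EM = [0,-38094210161280,0,0,0,0,0,0,0,0,0,0,0,4232690017920,0,0,0,0,0,0,0,0,0,0]"
  by (simp add: EM_def)

lemma lin_cert_13: "lin [0,-38094210161280,0,0,0,0,0,0,0,0,0,0,0,4232690017920,0,0,0,0,0,0,0,0,0,0] A = (4232690017920) * (A ! 13 - (0) * A ! 0 - (9) * A ! 1)"
  by (simp add: lin_def lessThan_nat_numeral algebra_simps)

lemma cert_14: "combv [486488745426,-438700676160,339454669680,-198723102060,52175760141,51310222102,-79852497985,40954883155,22747973105,-60900851111,46012623140,12632152425,-79034473605,116310239900,-110047589129,73233927575,-31679189945,4375370525,5351029960,-4776766863,1923869670,-346983510,0,0] EM = [8465380035840,42326900179200,0,0,0,0,0,0,0,0,0,0,0,0,8465380035840,0,0,0,0,0,0,0,0,0]"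
  by (simp add: EM_def)

lemma lin_cert_14: "lin [8465380035840,42326900179200,0,0,0,0,0,0,0,0,0,0,0,0,8465380035840,0,0,0,0,0,0,0,0,0] A = (8465380035840) * (A ! 14 - (-1) * A ! 0 - (-5) * A ! 1)"
  by (simp add: lin_def lessThan_nat_numeral algebra_simps)

lemma cert_15: "combv [939764698704,-738448455300,422862963365,-123587935965,-54346505523,84755207721,-23029408285,-42013987845,50953063925,-6458742555,-42950351166,48993519380,-1401776740,-68693640930,116512663485,-117150797479,79286351055,-32243717665,1163649765,8124289305,-5226952473,1243480325,0,0] EM = [-8465380035840,42326900179200,0,0,0,0,0,0,0,0,0,0,0,0,0,8465380035840,0,0,0,0,0,0,0,0]"
  by (simp add: EM_def)

lemma lin_cert_15: "lin [-8465380035840,42326900179200,0,0,0,0,0,0,0,0,0,0,0,0,0,8465380035840,0,0,0,0,0,0,0,0] A = (8465380035840) * (A ! 15 - (1) * A ! 0 - (-5) * A ! 1)"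
  by (simp add: lin_def lessThan_nat_numeral algebra_simps)

lemma cert_16: "combv [-1547537497920,1294085825484,-857914173175,373973171947,1428119565,-165925456035,128743036671,993570675,-93125947555,82856488745,-140132790,-72546813236,72436981540,-1050222090,-86961776095,133140774305,-118648493289,68689388235,-22144830135,-498317655,3733538095,-1159567543,0,0] EM = [0,-93119180394240,0,0,0,0,0,0,0,0,0,0,0,0,0,0,8465380035840,0,0,0,0,0,0,0]"
  by (simp add: EM_def)

lemma lin_cert_16: "lin [0,-93119180394240,0,0,0,0,0,0,0,0,0,0,0,0,0,0,8465380035840,0,0,0,0,0,0,0] A = (8465380035840) * (A ! 16 - (0) * A ! 0 - (11) * A ! 1)"
  by (simp add: lin_def lessThan_nat_numeral algebra_simps)

lemma cert_17: "combv [581923081506,-552645776928,456229008360,-274614191532,57457594773,98972847694,-127061373361,45200431771,57447194825,-93862434935,44340967748,38627831697,-82107973389,52264668860,25955925175,-97541181505,123020692111,-101758608259,60367573840,-25445750535,7003595862,-966557838,0,0] EM = [8465380035840,50792280215040,0,0,0,0,0,0,0,0,0,0,0,0,0,0,0,8465380035840,0,0,0,0,0,0]"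
  by (simp add: EM_def)

lemma lin_cert_17: "lin [8465380035840,50792280215040,0,0,0,0,0,0,0,0,0,0,0,0,0,0,0,8465380035840,0,0,0,0,0,0] A = (8465380035840) * (A ! 17 - (-1) * A ! 0 - (-6) * A ! 1)"
  by (simp add: lin_def lessThan_nat_numeral algebra_simps)

lemma cert_18: "combv [1094556299826,-862166016684,494579888827,-143839653148,-63686799635,95891709401,-21447790738,-51319257155,55058664951,-1205829742,-48630479990,45609578845,4673863663,-52464134618,50415959324,6398059737,-79312363955,120588992612,-111021180205,68874083413,-27222078022,5251442425,0,0] EM = [-8465380035840,50792280215040,0,0,0,0,0,0,0,0,0,0,0,0,0,0,0,0,8465380035840,0,0,0,0,0]"
  by (simp add: EM_def)

lemma lin_cert_18: "lin [-8465380035840,50792280215040,0,0,0,0,0,0,0,0,0,0,0,0,0,0,0,0,8465380035840,0,0,0,0,0] A = (8465380035840) * (A ! 18 - (1) * A ! 0 - (-6) * A ! 1)"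
  by (simp add: lin_def lessThan_nat_numeral algebra_simps)

lemma cert_19: "combv [-1707825731364,1529331684252,-1128886999603,552532201913,1759124985,-296461410847,246679796809,1480934235,-192647565107,173423120271,308771550,-146370679930,136087765418,-755154630,-119253306549,115168995997,-912707505,-119992822583,160441852217,-118010911899,51391697633,-10513240375,0,0] EM = [0,-110049940465920,0,0,0,0,0,0,0,0,0,0,0,0,0,0,0,0,0,8465380035840,0,0,0,0]"
  by (simp add: EM_def)

lemma lin_cert_19: "lin [0,-110049940465920,0,0,0,0,0,0,0,0,0,0,0,0,0,0,0,0,0,8465380035840,0,0,0,0] A = (8465380035840) * (A ! 19 - (0) * A ! 0 - (13) * A ! 1)"
  by (simp add: lin_def lessThan_nat_numeral algebra_simps)

lemma cert_20: "combv [363249075144,-648435989616,846868111266,-633679634917,86702601561,380412892258,-420564362320,76167205093,286001897035,-336613441440,74285056696,218611842036,-273228833244,76191044248,158548415532,-219582584645,84194965933,101822930636,-189710336738,153390290673,-69814558813,14626636926,0,0] EM = [8465380035840,59257660250880,0,0,0,0,0,0,0,0,0,0,0,0,0,0,0,0,0,0,8465380035840,0,0,0]"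
  by (simp add: EM_def)

lemma lin_cert_20: "lin [8465380035840,59257660250880,0,0,0,0,0,0,0,0,0,0,0,0,0,0,0,0,0,0,8465380035840,0,0,0] A = (8465380035840) * (A ! 20 - (-1) * A ! 0 - (-7) * A ! 1)"
  by (simp add: lin_def lessThan_nat_numeral algebra_simps)

lemma cert_21: "combv [1869429176022,-1042239780156,57177964057,381066621668,-138500380985,-321479158565,450453107354,-129294446525,-291752479975,399684395350,-126523336490,-228989816337,331687975797,-126602244062,-155741011628,258352227983,-131039146301,-73176473932,182341835377,-156096242657,72773429942,-15435463037,0,0] EM = [-8465380035840,59257660250880,0,0,0,0,0,0,0,0,0,0,0,0,0,0,0,0,0,0,0,8465380035840,0,0]"
  by (simp add: EM_def)

lemma lin_cert_21: "lin [-8465380035840,59257660250880,0,0,0,0,0,0,0,0,0,0,0,0,0,0,0,0,0,0,0,8465380035840,0,0] A = (8465380035840) * (A ! 21 - (1) * A ! 0 - (-7) * A ! 1)"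
  by (simp add: lin_def lessThan_nat_numeral algebra_simps)

lemma cert_22: "combv [-705779980254,470519986836,-166582645386,-19729692620,29868112041,47144706198,-82693558823,29836118811,52841435625,-79943328145,29564664186,42720319277,-67533892945,29285259726,28039422569,-51744657609,29212672071,10549608127,-33091128336,29301203901,-13845661754,2956587132,0,0] EM = [0,-31745175134400,0,0,0,0,0,0,0,0,0,0,0,0,0,0,0,0,0,0,0,0,2116345008960,0]"
  by (simp add: EM_def)

lemma lin_cert_22: "lin [0,-31745175134400,0,0,0,0,0,0,0,0,0,0,0,0,0,0,0,0,0,0,0,0,2116345008960,0] A = (2116345008960) * (A ! 22 - (0) * A ! 0 - (15) * A ! 1)"
  by (simp add: lin_def lessThan_nat_numeral algebra_simps)

lemma cert_23: "combv [678820217940,-470519986836,194279984967,-10716505810,-22353089028,-29063439621,59522223653,-23872615170,-38156233878,60716535907,-23969314530,-31440487010,51853962898,-23689910070,-20306452493,39470097042,-23249168430,-6761180983,24212632599,-21786180888,10359225638,-2219009865,0,0] EM = [4232690017920,33861520143360,0,0,0,0,0,0,0,0,0,0,0,0,0,0,0,0,0,0,0,0,0,4232690017920]"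
  by (simp add: EM_def)

lemma lin_cert_23: "lin [4232690017920,33861520143360,0,0,0,0,0,0,0,0,0,0,0,0,0,0,0,0,0,0,0,0,0,4232690017920] A = (4232690017920) * (A ! 23 - (-1) * A ! 0 - (-8) * A ! 1)"
  by (simp add: lin_def lessThan_nat_numeral algebra_simps)

lemma final_la:
  assumes A: "length A = 24" and E: "\<And>j. Ecal A j = 0"
  shows "A = map2 (\<lambda>x y. A ! 0 * x + A ! 1 * y) A1 A2"
proof -
  have rows: "\<forall>r\<in>set EM. length r = 24 \<and> lin r A = 0"
    unfolding EM_ecv using E by (simp add: len_ecv Ecal_lin[OF A, symmetric])

  have c2: "A ! 2 = (-1) * A ! 0 + (-1) * A ! 1"
  proof -
    have "lin [0,0,0,0,0,0,0,0,0,0,0,0,0,0,0,0,0,0,0,0,0,0,0,0] A = 0" by (rule lin_zero)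
    have "lin (combv [-117464174742,101199806484,-73937994919,43875894956,-18736017655,2971334855,3246665408,-3053655703,650607835,939856000,-916238770,128153801,363826883,-278522278,-5279222,123127117,-62062447,-15127978,27050753,-6339703,-4015822,2007911,0,0] EM) A = 0" by (rule combv_zero[OF rows])
    then have "(8465380035840) * (A ! 2 - (-1) * A ! 0 - (-1) * A ! 1) = 0"
      unfolding cert_2 lin_cert_2 .
    then show ?thesis by simp
  qed

  have c3: "A ! 3 = (1) * A ! 0 + (-1) * A ! 1"
  proof -
    have "lin [0,0,0,0,0,0,0,0,0,0,0,0,0,0,0,0,0,0,0,0,0,0,0,0] A = 0" by (rule lin_zero)
    have "lin (combv [336176345832,-292603984056,218971530228,-136507741399,65581239555,-18496829500,-3292843858,6948921035,-2794526203,-1175368270,1982240660,-704660620,-490100428,635062028,-168187138,-172397587,168053675,-31931182,-36470968,27366723,-6339703,0,0,0] EM) A = 0" by (rule combv_zero[OF rows])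
    then have "(8465380035840) * (A ! 3 - (1) * A ! 0 - (-1) * A ! 1) = 0"
      unfolding cert_3 lin_cert_3 .
    then show ?thesis by simp
  qed

  have c4: "A ! 4 = (0) * A ! 0 + (3) * A ! 1"
  proof -
    have "lin [0,0,0,0,0,0,0,0,0,0,0,0,0,0,0,0,0,0,0,0,0,0,0,0] A = 0" by (rule lin_zero)
    have "lin (combv [-393851980404,352748263092,-281235735617,196800979871,-117532535589,56345725987,-18041239281,19941345,4472337095,-2691997543,-47551350,1235832630,-797252358,-101243010,473222885,-246387697,-80203875,161838663,-58665965,-30131265,35398367,-10355525,0,0] EM) A = 0" by (rule combv_zero[OF rows])
    then have "(8465380035840) * (A ! 4 - (0) * A ! 0 - (3) * A ! 1) = 0"
      unfolding cert_4 lin_cert_4 .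
    then show ?thesis by simp
  qed

  have c5: "A ! 5 = (-1) * A ! 0 + (-2) * A ! 1"
  proof -
    have "lin [0,0,0,0,0,0,0,0,0,0,0,0,0,0,0,0,0,0,0,0,0,0,0,0] A = 0" by (rule lin_zero)
    have "lin (combv [57782840838,-78873956988,108981194003,-130850310964,131367768863,-107976541355,69212107964,-29668434805,2229626385,8264389140,-6176766358,368584615,2591904397,-1784302810,-102081510,841598223,-428434525,-90189442,187197475,-59297905,-15127978,10355525,0,0] EM) A = 0" by (rule combv_zero[OF rows])
    then have "(8465380035840) * (A ! 5 - (-1) * A ! 0 - (-2) * A ! 1) = 0"
      unfolding cert_5 lin_cert_5 .
    then show ?thesis by simp
  qed

  have c6: "A ! 6 = (1) * A ! 0 + (-2) * A ! 1"
  proof -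
    have "lin [0,0,0,0,0,0,0,0,0,0,0,0,0,0,0,0,0,0,0,0,0,0,0,0] A = 0" by (rule lin_zero)
    have "lin (combv [492372064662,-388394196744,219169991478,-43986340892,-83832636945,138105081680,-125910668245,77518748885,-27332931305,-2979521555,10502647120,-5201268493,-1221853303,3137754928,-1498568753,-437182847,945382025,-434952907,-82789738,204524643,-107375678,22278300,0,0] EM) A = 0" by (rule combv_zero[OF rows])
    then have "(8465380035840) * (A ! 6 - (1) * A ! 0 - (-2) * A ! 1) = 0"
      unfolding cert_6 lin_cert_6 .
    then show ?thesis by simp
  qed

  have c7: "A ! 7 = (0) * A ! 0 + (5) * A ! 1"
  proof -
    have "lin [0,0,0,0,0,0,0,0,0,0,0,0,0,0,0,0,0,0,0,0,0,0,0,0] A = 0" by (rule lin_zero)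
    have "lin (combv [-703086073560,587994121860,-393953586101,178903719885,200728935,-108110442945,140319401185,-117490131639,70674210775,-26640210825,-193824450,8388562000,-5115732128,-401352990,2612707335,-1440534485,-341854635,849367885,-338057445,-140466405,183127665,-54912125,0,0] EM) A = 0" by (rule combv_zero[OF rows])
    then have "(8465380035840) * (A ! 7 - (0) * A ! 0 - (5) * A ! 1) = 0"
      unfolding cert_7 lin_cert_7 .
    then show ?thesis by simp
  qed

  have c8: "A ! 8 = (-1) * A ! 0 + (-3) * A ! 1"
  proof -
    have "lin [0,0,0,0,0,0,0,0,0,0,0,0,0,0,0,0,0,0,0,0,0,0,0,0] A = 0" by (rule lin_zero)
    have "lin (combv [210069366048,-202591518372,179191030297,-131540196119,61000737735,18260140965,-84444997549,118261496685,-112720690109,77335506005,-33280577670,1191426420,10369251228,-6978478986,124494293,2829462007,-1791948735,8873687,597472233,-336240813,56654413,6152545,0,0] EM) A = 0" by (rule combv_zero[OF rows])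
    then have "(8465380035840) * (A ! 8 - (-1) * A ! 0 - (-3) * A ! 1) = 0"
      unfolding cert_8 lin_cert_8 .
    then show ?thesis by simp
  qed

  have c9: "A ! 9 = (1) * A ! 0 + (-3) * A ! 1"
  proof -
    have "lin [0,0,0,0,0,0,0,0,0,0,0,0,0,0,0,0,0,0,0,0,0,0,0,0] A = 0" by (rule lin_zero)
    have "lin (combv [642965374446,-502339297512,281506652922,-70210433276,-57278883669,75641432756,-13427013949,-70520741455,122878680235,-122088336779,81463320640,-31758180385,-1688970547,11724512800,-6801259553,-540928403,3360225125,-2035375723,-33546670,807459615,-519626102,124000440,0,0] EM) A = 0" by (rule combv_zero[OF rows])
    then have "(8465380035840) * (A ! 9 - (1) * A ! 0 - (-3) * A ! 1) = 0"
      unfolding cert_9 lin_cert_9 .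
    then show ?thesis by simp
  qed

  have c10: "A ! 10 = (0) * A ! 0 + (7) * A ! 1"
  proof -
    have "lin [0,0,0,0,0,0,0,0,0,0,0,0,0,0,0,0,0,0,0,0,0,0,0,0] A = 0" by (rule lin_zero)
    have "lin (combv [-500002751610,411670062924,-266265392784,113372144872,257157135,-50056025534,41028850273,113568135,-41850109115,63023466735,-58970611812,38355228495,-15003197091,-400092360,4979461905,-2761936913,-361084245,1309593031,-581268980,-160956645,257425894,-79900530,0,0] EM) A = 0" by (rule combv_zero[OF rows])
    then have "(4232690017920) * (A ! 10 - (0) * A ! 0 - (7) * A ! 1) = 0"
      unfolding cert_10 lin_cert_10 .
    then show ?thesis by simp
  qed

  have c11: "A ! 11 = (-1) * A ! 0 + (-4) * A ! 1"
  proof -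
    have "lin [0,0,0,0,0,0,0,0,0,0,0,0,0,0,0,0,0,0,0,0,0,0,0,0] A = 0" by (rule lin_zero)
    have "lin (combv [354295805988,-321638544828,254367620497,-158030595590,52918799820,30606345125,-66607662073,47662434910,10346660250,-75371128975,115040199490,-113374748094,78228418278,-33561838058,1878455993,9201364002,-6539548958,1003579787,1561368353,-1339722648,489204178,-74496455,0,0] EM) A = 0" by (rule combv_zero[OF rows])
    then have "(8465380035840) * (A ! 11 - (-1) * A ! 0 - (-4) * A ! 1) = 0"
      unfolding cert_11 lin_cert_11 .
    then show ?thesis by simp
  qed

  have c12: "A ! 12 = (1) * A ! 0 + (-4) * A ! 1"
  proof -
    have "lin [0,0,0,0,0,0,0,0,0,0,0,0,0,0,0,0,0,0,0,0,0,0,0,0] A = 0" by (rule lin_zero)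
    have "lin (combv [792139936452,-619401428844,350178050381,-96525874806,-52919997660,75878785585,-18116518333,-44199018826,54506539650,-5536944555,-67065201910,116939503034,-119279456962,82095644558,-33627812883,-300195702,11249858522,-7089876025,271213357,2472341088,-1689518238,417484229,0,0] EM) A = 0" by (rule combv_zero[OF rows])
    then have "(8465380035840) * (A ! 12 - (1) * A ! 0 - (-4) * A ! 1) = 0"
      unfolding cert_12 lin_cert_12 .
    then show ?thesis by simp
  qed

  have c13: "A ! 13 = (0) * A ! 0 + (9) * A ! 1"
  proof -
    have "lin [0,0,0,0,0,0,0,0,0,0,0,0,0,0,0,0,0,0,0,0,0,0,0,0] A = 0" by (rule lin_zero)
    have "lin (combv [-642980425410,529369910748,-341655056640,144276118648,480348675,-60521458330,46407741661,262362495,-34473659203,32657653075,-195085080,-39246168365,62180616265,-59324413452,38090375845,-14157234385,-509878605,4036549315,-1891100464,-235353825,582115870,-185300370,0,0] EM) A = 0" by (rule combv_zero[OF rows])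
    then have "(4232690017920) * (A ! 13 - (0) * A ! 0 - (9) * A ! 1) = 0"
      unfolding cert_13 lin_cert_13 .
    then show ?thesis by simp
  qed

  have c14: "A ! 14 = (-1) * A ! 0 + (-5) * A ! 1"
  proof -
    have "lin [0,0,0,0,0,0,0,0,0,0,0,0,0,0,0,0,0,0,0,0,0,0,0,0] A = 0" by (rule lin_zero)
    have "lin (combv [486488745426,-438700676160,339454669680,-198723102060,52175760141,51310222102,-79852497985,40954883155,22747973105,-60900851111,46012623140,12632152425,-79034473605,116310239900,-110047589129,73233927575,-31679189945,4375370525,5351029960,-4776766863,1923869670,-346983510,0,0] EM) A = 0" by (rule combv_zero[OF rows])
    then have "(8465380035840) * (A ! 14 - (-1) * A ! 0 - (-5) * A ! 1) = 0"
      unfolding cert_14 lin_cert_14 .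
    then show ?thesis by simp
  qed

  have c15: "A ! 15 = (1) * A ! 0 + (-5) * A ! 1"
  proof -
    have "lin [0,0,0,0,0,0,0,0,0,0,0,0,0,0,0,0,0,0,0,0,0,0,0,0] A = 0" by (rule lin_zero)
    have "lin (combv [939764698704,-738448455300,422862963365,-123587935965,-54346505523,84755207721,-23029408285,-42013987845,50953063925,-6458742555,-42950351166,48993519380,-1401776740,-68693640930,116512663485,-117150797479,79286351055,-32243717665,1163649765,8124289305,-5226952473,1243480325,0,0] EM) A = 0" by (rule combv_zero[OF rows])
    then have "(8465380035840) * (A ! 15 - (1) * A ! 0 - (-5) * A ! 1) = 0"
      unfolding cert_15 lin_cert_15 .
    then show ?thesis by simp
  qed

  have c16: "A ! 16 = (0) * A ! 0 + (11) * A ! 1"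
  proof -
    have "lin [0,0,0,0,0,0,0,0,0,0,0,0,0,0,0,0,0,0,0,0,0,0,0,0] A = 0" by (rule lin_zero)
    have "lin (combv [-1547537497920,1294085825484,-857914173175,373973171947,1428119565,-165925456035,128743036671,993570675,-93125947555,82856488745,-140132790,-72546813236,72436981540,-1050222090,-86961776095,133140774305,-118648493289,68689388235,-22144830135,-498317655,3733538095,-1159567543,0,0] EM) A = 0" by (rule combv_zero[OF rows])
    then have "(8465380035840) * (A ! 16 - (0) * A ! 0 - (11) * A ! 1) = 0"
      unfolding cert_16 lin_cert_16 .
    then show ?thesis by simp
  qed

  have c17: "A ! 17 = (-1) * A ! 0 + (-6) * A ! 1"
  proof -
    have "lin [0,0,0,0,0,0,0,0,0,0,0,0,0,0,0,0,0,0,0,0,0,0,0,0] A = 0" by (rule lin_zero)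
    have "lin (combv [581923081506,-552645776928,456229008360,-274614191532,57457594773,98972847694,-127061373361,45200431771,57447194825,-93862434935,44340967748,38627831697,-82107973389,52264668860,25955925175,-97541181505,123020692111,-101758608259,60367573840,-25445750535,7003595862,-966557838,0,0] EM) A = 0" by (rule combv_zero[OF rows])
    then have "(8465380035840) * (A ! 17 - (-1) * A ! 0 - (-6) * A ! 1) = 0"
      unfolding cert_17 lin_cert_17 .
    then show ?thesis by simp
  qed

  have c18: "A ! 18 = (1) * A ! 0 + (-6) * A ! 1"
  proof -
    have "lin [0,0,0,0,0,0,0,0,0,0,0,0,0,0,0,0,0,0,0,0,0,0,0,0] A = 0" by (rule lin_zero)
    have "lin (combv [1094556299826,-862166016684,494579888827,-143839653148,-63686799635,95891709401,-21447790738,-51319257155,55058664951,-1205829742,-48630479990,45609578845,4673863663,-52464134618,50415959324,6398059737,-79312363955,120588992612,-111021180205,68874083413,-27222078022,5251442425,0,0] EM) A = 0" by (rule combv_zero[OF rows])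
    then have "(8465380035840) * (A ! 18 - (1) * A ! 0 - (-6) * A ! 1) = 0"
      unfolding cert_18 lin_cert_18 .
    then show ?thesis by simp
  qed

  have c19: "A ! 19 = (0) * A ! 0 + (13) * A ! 1"
  proof -
    have "lin [0,0,0,0,0,0,0,0,0,0,0,0,0,0,0,0,0,0,0,0,0,0,0,0] A = 0" by (rule lin_zero)
    have "lin (combv [-1707825731364,1529331684252,-1128886999603,552532201913,1759124985,-296461410847,246679796809,1480934235,-192647565107,173423120271,308771550,-146370679930,136087765418,-755154630,-119253306549,115168995997,-912707505,-119992822583,160441852217,-118010911899,51391697633,-10513240375,0,0] EM) A = 0" by (rule combv_zero[OF rows])
    then have "(8465380035840) * (A ! 19 - (0) * A ! 0 - (13) * A ! 1) = 0"
      unfolding cert_19 lin_cert_19 .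
    then show ?thesis by simp
  qed

  have c20: "A ! 20 = (-1) * A ! 0 + (-7) * A ! 1"
  proof -
    have "lin [0,0,0,0,0,0,0,0,0,0,0,0,0,0,0,0,0,0,0,0,0,0,0,0] A = 0" by (rule lin_zero)
    have "lin (combv [363249075144,-648435989616,846868111266,-633679634917,86702601561,380412892258,-420564362320,76167205093,286001897035,-336613441440,74285056696,218611842036,-273228833244,76191044248,158548415532,-219582584645,84194965933,101822930636,-189710336738,153390290673,-69814558813,14626636926,0,0] EM) A = 0" by (rule combv_zero[OF rows])
    then have "(8465380035840) * (A ! 20 - (-1) * A ! 0 - (-7) * A ! 1) = 0"
      unfolding cert_20 lin_cert_20 .
    then show ?thesis by simp
  qed

  have c21: "A ! 21 = (1) * A ! 0 + (-7) * A ! 1"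
  proof -
    have "lin [0,0,0,0,0,0,0,0,0,0,0,0,0,0,0,0,0,0,0,0,0,0,0,0] A = 0" by (rule lin_zero)
    have "lin (combv [1869429176022,-1042239780156,57177964057,381066621668,-138500380985,-321479158565,450453107354,-129294446525,-291752479975,399684395350,-126523336490,-228989816337,331687975797,-126602244062,-155741011628,258352227983,-131039146301,-73176473932,182341835377,-156096242657,72773429942,-15435463037,0,0] EM) A = 0" by (rule combv_zero[OF rows])
    then have "(8465380035840) * (A ! 21 - (1) * A ! 0 - (-7) * A ! 1) = 0"
      unfolding cert_21 lin_cert_21 .
    then show ?thesis by simp
  qed

  have c22: "A ! 22 = (0) * A ! 0 + (15) * A ! 1"
  proof -
    have "lin [0,0,0,0,0,0,0,0,0,0,0,0,0,0,0,0,0,0,0,0,0,0,0,0] A = 0" by (rule lin_zero)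
    have "lin (combv [-705779980254,470519986836,-166582645386,-19729692620,29868112041,47144706198,-82693558823,29836118811,52841435625,-79943328145,29564664186,42720319277,-67533892945,29285259726,28039422569,-51744657609,29212672071,10549608127,-33091128336,29301203901,-13845661754,2956587132,0,0] EM) A = 0" by (rule combv_zero[OF rows])
    then have "(2116345008960) * (A ! 22 - (0) * A ! 0 - (15) * A ! 1) = 0"
      unfolding cert_22 lin_cert_22 .
    then show ?thesis by simp
  qed

  have c23: "A ! 23 = (-1) * A ! 0 + (-8) * A ! 1"
  proof -
    have "lin [0,0,0,0,0,0,0,0,0,0,0,0,0,0,0,0,0,0,0,0,0,0,0,0] A = 0" by (rule lin_zero)
    have "lin (combv [678820217940,-470519986836,194279984967,-10716505810,-22353089028,-29063439621,59522223653,-23872615170,-38156233878,60716535907,-23969314530,-31440487010,51853962898,-23689910070,-20306452493,39470097042,-23249168430,-6761180983,24212632599,-21786180888,10359225638,-2219009865,0,0] EM) A = 0" by (rule combv_zero[OF rows])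
    then have "(4232690017920) * (A ! 23 - (-1) * A ! 0 - (-8) * A ! 1) = 0"
      unfolding cert_23 lin_cert_23 .
    then show ?thesis by simp
  qed

  show ?thesis
  proof (rule nth_equalityI)
    show "length A = length (map2 (\<lambda>x y. A ! 0 * x + A ! 1 * y) A1 A2)" using A by simp
  next
    fix i assume "i < length A"
    then have "i = 0 \<or> i = 1 \<or> i = 2 \<or> i = 3 \<or> i = 4 \<or> i = 5 \<or> i = 6 \<or> i = 7 \<or> i = 8 \<or> i = 9 \<or> i = 10 \<or> i = 11 \<or> i = 12 \<or> i = 13 \<or> i = 14 \<or> i = 15 \<or> i = 16 \<or> i = 17 \<or> i = 18 \<or> i = 19 \<or> i = 20 \<or> i = 21 \<or> i = 22 \<or> i = 23" using A by presburger
    then show "A ! i = map2 (\<lambda>x y. A ! 0 * x + A ! 1 * y) A1 A2 ! i"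
      by (elim disjE) (simp_all add: A1_explicit A2_def c2 c3 c4 c5 c6 c7 c8 c9 c10 c11 c12 c13 c14 c15 c16 c17 c18 c19 c20 c21 c22 c23)
  qed
qed

theorem theorem15:
  shows "(\<Inter>m\<in>{m::nat. m \<ge> 1}. Pset m) = (\<Inter>m\<in>{m::nat. m \<ge> 1 \<and> odd m}. Pset m)
       \<and> (\<Inter>m\<in>{m::nat. m \<ge> 1 \<and> odd m}. Pset m) = span2 A1 A2"
proof -
  have sub1: "(\<Inter>m\<in>{m::nat. m \<ge> 1 \<and> odd m}. Pset m) \<subseteq> span2 A1 A2"
  proof
    fix A assume A: "A \<in> (\<Inter>m\<in>{m::nat. m \<ge> 1 \<and> odd m}. Pset m)"
    have l: "length A = 24" by (rule Ecal_zero(1)[OF A])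
    have "A = map2 (\<lambda>x y. A ! 0 * x + A ! 1 * y) A1 A2"
      by (rule final_la[OF l Ecal_zero(2)[OF A]])
    then show "A \<in> span2 A1 A2" unfolding span2_def by blast
  qed
  have sub2: "span2 A1 A2 \<subseteq> (\<Inter>m\<in>{m::nat. m \<ge> 1}. Pset m)"
    using span_in_P by blast
  have sub3: "(\<Inter>m\<in>{m::nat. m \<ge> 1}. Pset m) \<subseteq> (\<Inter>m\<in>{m::nat. m \<ge> 1 \<and> odd m}. Pset m)"
    by blast
  show ?thesis using sub1 sub2 sub3 by blast
qed

end
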